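(* (1) For every $k\ge1$ and every choice of signs, the $0$-model $\mathcal V=(V,(\cdot,\cdot),R)$ is indecomposable. (2) If in addition $f_i'(u)+1\ne0$ for all $u$ and all $i$, then the manifold $\mathcal M_F$ is locally indecomposable at every point.
   Context: Fix an integer $k\ge 1$ and signs $\varepsilon_1,\dots,\varepsilon_k\in\{\pm1\}$. Model: let $V=\mathbb R^{3k+2}$ with basis $\{U_0,\dots,U_k,V_0,\dots,V_k,S_1,\dots,S_k\}$, let $(\cdot,\cdot)$ be the symmetric inner product whose only nonzero values on pairs of basis vectors are $(U_i,V_i)=(V_i,U_i)=1$ for $0\le i\le k$ and $(S_i,S_i)=\varepsilon_i$ for $1\le i\le k$, and let $R$ be the algebraic curvature tensor on $V$ (a 4-linear form with $R(x,y,z,w)=-R(y,x,z,w)=R(z,w,x,y)$ and $R(x,y,z,w)+R(y,z,x,w)+R(z,x,y,w)=0$) whose only nonzero values on 4-tuples of basis vectors are those obtained from $R(U_0,U_i,U_i,S_i)=1$ ($1\le i\le k$) by these symmetries. Manifold: let $f_1,\dots,f_k:\mathbb R\to\mathbb R$ be smooth, $F=(f_1,\dots,f_k)$. On $\mathbb R^{3k+2}$ with coordinates $(u_0,\dots,u_k,v_0,\dots,v_k,s_1,\dots,s_k)$ let $g_F$ be the symmetric metric whose only nonzero components on coordinate vector fields are (up to symmetry), for $1\le i\le k$ and $0\le i',j\le k$: $g_F(\partial_{u_0},\partial_{u_i})=2f_i(u_i)s_i$, $g_F(\partial_{u_i},\partial_{u_i})=-2u_0s_i$, $g_F(\partial_{u_{i'}},\partial_{v_j})=\delta_{i'j}$,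 $g_F(\partial_{s_i},\partial_{s_i})=\varepsilon_i$; $\mathcal M_F=(\mathbb R^{3k+2},g_F)$. A $0$-model $(W,\langle\cdot,\cdot\rangle,T)$ (vector space, nondegenerate symmetric inner product, algebraic curvature tensor) is decomposable if there is a nontrivial orthogonal direct sum $W=W_1\oplus W_2$ such that $T=T_1\oplus T_2$ with $T_p$ a tensor on $W_p$ (i.e. $T(x_1+x_2,y_1+y_2,z_1+z_2,w_1+w_2)=T_1(x_1,y_1,z_1,w_1)+T_2(x_2,y_2,z_2,w_2)$ for $x_p,y_p,z_p,w_p\in W_p$); it is indecomposable otherwise. A pseudo-Riemannian manifold is locally decomposable at $P$ if some neighborhood of $P$ is isometric to a product $(\mathcal O_1\times\mathcal O_2,g_1\oplus g_2)$ of two pseudo-Riemannian manifolds of positive dimension; otherwise it is locally indecomposable at $P$. *)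

theory Defs
  imports "HOL-Analysis.Analysis"
begin

fun Ck :: "nat \<Rightarrow> 'a::real_normed_vector set \<Rightarrow> ('a \<Rightarrow> 'b::real_normed_vector) \<Rightarrow> bool" where
  "Ck 0 S f = continuous_on S f"
| "Ck (Suc m) S f = (\<exists>f'. (\<forall>x\<in>S. (f has_derivative f' x) (at x)) \<and> (\<forall>v. Ck m S (\<lambda>x. f' x v)))"

definition smooth_on :: "'a::real_normed_vector set \<Rightarrow> ('a \<Rightarrow> 'b::real_normed_vector) \<Rightarrow> bool" where
  "smooth_on S f \<longleftrightarrow> (\<forall>m. Ck m S f)"

definition bilin :: "real^'n^'n \<Rightarrow> real^'n \<Rightarrow> real^'n \<Rightarrow> real" where
  "bilin M v w = (\<Sum>i\<in>UNIV. \<Sum>j\<in>UNIV. v$i * M$i$j * w$j)"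

definition metric_on :: "(real^'n) set \<Rightarrow> (real^'n \<Rightarrow> real^'n^'n) \<Rightarrow> bool" where
  "metric_on S g \<longleftrightarrow> smooth_on S g \<and> (\<forall>x\<in>S. transpose (g x) = g x \<and> det (g x) \<noteq> 0)"

definition splice :: "'n set \<Rightarrow> real^'n \<Rightarrow> real^'n \<Rightarrow> real^'n" where
  "splice I a b = (\<chi> i. if i \<in> I then a$i else b$i)"

text \<open>(R^n, g) is locally decomposable at P: an open neighbourhood U of P is isometric
 (via a diffeomorphism phi with inverse psi) to an open product W = A x B (coordinates
 split as I and its nonempty complement) carrying a product metric h = g1 (+) g2.\<close>
definition locally_decomposable_at :: "(real^'n::finite \<Rightarrow> real^'n^'n) \<Rightarrow> real^'n \<Rightarrow> bool" where
  "locally_decomposable_at g P \<longleftrightarrow>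
    (\<exists>U W (\<phi>::real^'n \<Rightarrow> real^'n) \<psi> h I A B.
      open U \<and> P \<in> U \<and> open W \<and> I \<noteq> {} \<and> I \<noteq> UNIV \<and>
      W = {splice I a b | a b. a \<in> A \<and> b \<in> B} \<and>
      metric_on W h \<and>
      (\<forall>x\<in>W. \<forall>i j. i \<in> I \<and> j \<notin> I \<longrightarrow> h x $ i $ j = 0 \<and> h x $ j $ i = 0) \<and>
      (\<forall>x\<in>W. \<forall>y\<in>W. \<forall>i\<in>I. \<forall>j\<in>I. h x $ i $ j = h (splice I x y) $ i $ j) \<and>
      (\<forall>x\<in>W. \<forall>y\<in>W. \<forall>i\<in>-I. \<forall>j\<in>-I. h x $ i $ j = h (splice I y x) $ i $ j) \<and>
      \<phi> ` W = U \<and> \<psi> ` U = W \<and> (\<forall>x\<in>W. \<psi> (\<phi> x) = x) \<and> (\<forall>y\<in>U. \<phi> (\<psi> y) = y) \<and>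
      smooth_on W \<phi> \<and> smooth_on U \<psi> \<and>
      (\<forall>x\<in>W. \<forall>i j. h x $ i $ j =
          bilin (g (\<phi> x)) (frechet_derivative \<phi> (at x) (axis i 1))
                            (frechet_derivative \<phi> (at x) (axis j 1))))"

definition decomposable_model ::
  "('v::real_vector \<Rightarrow> 'v \<Rightarrow> real) \<Rightarrow> ('v \<Rightarrow> 'v \<Rightarrow> 'v \<Rightarrow> 'v \<Rightarrow> real) \<Rightarrow> bool" where
  "decomposable_model ip T \<longleftrightarrow>
    (\<exists>W1 W2 (T1::'v \<Rightarrow> 'v \<Rightarrow> 'v \<Rightarrow> 'v \<Rightarrow> real) (T2::'v \<Rightarrow> 'v \<Rightarrow> 'v \<Rightarrow> 'v \<Rightarrow> real).
      subspace W1 \<and> subspace W2 \<and> W1 \<noteq> {0} \<and> W2 \<noteq> {0} \<and> W1 \<inter> W2 = {0} \<and>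
      {x + y | x y. x \<in> W1 \<and> y \<in> W2} = UNIV \<and>
      (\<forall>x\<in>W1. \<forall>y\<in>W2. ip x y = 0) \<and>
      (\<forall>x1\<in>W1. \<forall>y1\<in>W1. \<forall>z1\<in>W1. \<forall>w1\<in>W1. \<forall>x2\<in>W2. \<forall>y2\<in>W2. \<forall>z2\<in>W2. \<forall>w2\<in>W2.
         T (x1 + x2) (y1 + y2) (z1 + z2) (w1 + w2) = T1 x1 y1 z1 w1 + T2 x2 y2 z2 w2))"

text \<open>Basis/coordinate labels: U_i = i (0..k), V_i = k+1+i (0..k), S_i = 2k+1+i (1..k).
 The index type 'n is labelled by a bijection idx onto {..<3k+2}.\<close>

definition Gm :: "nat \<Rightarrow> (nat \<Rightarrow> real) \<Rightarrow> nat \<Rightarrow> nat \<Rightarrow> real" where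
  "Gm k eps a b =
    (if (a \<le> k \<and> b = a + k + 1) \<or> (b \<le> k \<and> a = b + k + 1) then 1
     else if a = b \<and> 2*k+2 \<le> a \<and> a \<le> 3*k+1 then eps (a - (2*k+1)) else 0)"

definition ind4 :: "nat \<Rightarrow> nat \<Rightarrow> nat \<Rightarrow> nat \<Rightarrow> nat \<Rightarrow> nat \<Rightarrow> nat \<Rightarrow> nat \<Rightarrow> real" where
  "ind4 a b c d a' b' c' d' = (if a = a' \<and> b = b' \<and> c = c' \<and> d = d' then 1 else 0)"

text \<open>Components of R: orbit of R(U_0,U_i,U_i,S_i)=1 under the curvature symmetries.\<close>
definition Rn :: "nat \<Rightarrow> nat \<Rightarrow> nat \<Rightarrow> nat \<Rightarrow> nat \<Rightarrow> real" where
  "Rn k a b c d = (\<Sum>i=1..k. let A = 0; B = i; C = 2*k+1+i in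
       ind4 a b c d A B B C - ind4 a b c d B A B C - ind4 a b c d A B C B + ind4 a b c d B A C B
     + ind4 a b c d B C A B - ind4 a b c d C B A B - ind4 a b c d B C B A + ind4 a b c d C B B A)"

definition model_ip :: "nat \<Rightarrow> ('n::finite \<Rightarrow> nat) \<Rightarrow> (nat \<Rightarrow> real) \<Rightarrow> real^'n \<Rightarrow> real^'n \<Rightarrow> real" where
  "model_ip k idx eps x y = (\<Sum>p\<in>UNIV. \<Sum>q\<in>UNIV. x$p * Gm k eps (idx p) (idx q) * y$q)"

definition model_R :: "nat \<Rightarrow> ('n::finite \<Rightarrow> nat) \<Rightarrow> real^'n \<Rightarrow> real^'n \<Rightarrow> real^'n \<Rightarrow> real^'n \<Rightarrow> real" where
  "model_R k idx x y z w = (\<Sum>p\<in>UNIV. \<Sum>q\<in>UNIV. \<Sum>r\<in>UNIV. \<Sum>s\<in>UNIV.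
      Rn k (idx p) (idx q) (idx r) (idx s) * x$p * y$q * z$r * w$s)"

definition coord :: "('n::finite \<Rightarrow> nat) \<Rightarrow> real^'n \<Rightarrow> nat \<Rightarrow> real" where
  "coord idx x m = x $ (THE p. idx p = m)"

definition gF :: "nat \<Rightarrow> ('n::finite \<Rightarrow> nat) \<Rightarrow> (nat \<Rightarrow> real) \<Rightarrow> (nat \<Rightarrow> real \<Rightarrow> real)
                   \<Rightarrow> real^'n \<Rightarrow> real^'n^'n" where
  "gF k idx eps F x = (\<chi> p q. let a = idx p; b = idx q in
     if (a \<le> k \<and> b = a + k + 1) \<or> (b \<le> k \<and> a = b + k + 1) then 1
     else if a = b \<and> 2*k+2 \<le> a \<and> a \<le> 3*k+1 then eps (a - (2*k+1))
     else if a = 0 \<and> 1 \<le> b \<and> b \<le> k then 2 * F b (coord idx x b) * coord idx x (2*k+1+b)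
     else if b = 0 \<and> 1 \<le> a \<and> a \<le> k then 2 * F a (coord idx x a) * coord idx x (2*k+1+a)
     else if a = b \<and> 1 \<le> a \<and> a \<le> k then - 2 * coord idx x 0 * coord idx x (2*k+1+a)
     else 0)"

end

theory Submission
  imports Defs
begin


lemma vec_sum_axis: "(\<chi> i. c i) = (\<Sum>i\<in>UNIV. c i *\<^sub>R axis i (1::real))"
proof -
  have "\<And>i. (\<Sum>x\<in>UNIV. c x * (if i = x then 1 else 0)) = c i"
    by (simp add: if_distrib[of "\<lambda>y. c _ * y"] cong: if_cong)
  then show ?thesis by (simp add: vec_eq_iff sum_component axis_def)
qed

lemma has_derivative_vec:
  fixes f :: "'a::real_normed_vector \<Rightarrow> real^'n"
  assumes "\<And>i. ((\<lambda>x. f x $ i) has_derivative (\<lambda>h. f' h $ i)) F"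
  shows "(f has_derivative f') F"
proof -
  have e1: "f = (\<lambda>x. \<Sum>i\<in>UNIV. (f x $ i) *\<^sub>R axis i 1)"
    by (rule ext, subst vec_sum_axis[symmetric]) (simp add: vec_nth_inverse)
  have e2: "f' = (\<lambda>h. \<Sum>i\<in>UNIV. (f' h $ i) *\<^sub>R axis i 1)"
    by (rule ext, subst vec_sum_axis[symmetric]) (simp add: vec_nth_inverse)
  show ?thesis
    apply (subst e1, subst e2)
    apply (rule has_derivative_sum)
    apply (rule has_derivative_scaleR_left)
    apply (rule assms)
    done
qed

lemma schwarz_est:
  fixes f :: "'a::real_normed_vector \<Rightarrow> real"
  assumes S: "ball x r \<subseteq> S"
    and Df: "\<forall>y\<in>S. (f has_derivative Df y) (at y)"
    and L1: "linear L1"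
    and est: "\<forall>z. norm (z - x) < d \<longrightarrow> \<bar>Df z u - Df x u - L1 (z - x)\<bar> \<le> e * norm (z - x)"
    and t: "0 < t" "t * (norm u + norm v) < d" "t * (norm u + norm v) < r"
    and e: "0 \<le> e"
  shows "\<bar>(f (x + t *\<^sub>R u + t *\<^sub>R v) - f (x + t *\<^sub>R u) - f (x + t *\<^sub>R v) + f x) - t^2 * L1 v\<bar>
           \<le> e * t^2 * (2 * norm u + norm v)"
proof -
  define G where "G s = f (x + s *\<^sub>R u + t *\<^sub>R v) - f (x + s *\<^sub>R u)" for s
  define G' where "G' s = (\<lambda>h. h * (Df (x + s *\<^sub>R u + t *\<^sub>R v) u - Df (x + s *\<^sub>R u) u))" for s
  have inS: "x + s *\<^sub>R u + t' *\<^sub>R v \<in> S" if "0 \<le> s" "s \<le> t" "0 \<le> t'" "t' \<le> t" for s t'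
  proof -
    have "norm (s *\<^sub>R u + t' *\<^sub>R v) \<le> s * norm u + t' * norm v"
      using that by (metis abs_of_nonneg norm_scaleR norm_triangle_le order_refl)
    also have "\<dots> \<le> t * (norm u + norm v)"
      using that by (simp add: distrib_left add_mono mult_right_mono)
    finally have "norm (s *\<^sub>R u + t' *\<^sub>R v) < r" using t by linarith
    then have "dist (x + (s *\<^sub>R u + t' *\<^sub>R v)) x < r" by (simp add: dist_norm)
    then have "x + (s *\<^sub>R u + t' *\<^sub>R v) \<in> ball x r" by (simp add: dist_commute)
    then show ?thesis using S by (auto simp: add.assoc)
  qed
  have Gd: "(G has_derivative G' s) (at s within {0..t})" if "0 \<le> s" "s \<le> t" for s
  proof -
    have d1: "((\<lambda>s. f (x + s *\<^sub>R u + t *\<^sub>R v)) has_derivative (\<lambda>h. Df (x + s *\<^sub>R u + t *\<^sub>R v) (h *\<^sub>R u))) (at s within {0..t})"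
      apply (rule has_derivative_compose[where f="\<lambda>s. x + s *\<^sub>R u + t *\<^sub>R v", unfolded o_def])
       apply (auto intro!: derivative_eq_intros)[1]
      using Df inS[OF that, of t] t(1) by auto
    have d2: "((\<lambda>s. f (x + s *\<^sub>R u)) has_derivative (\<lambda>h. Df (x + s *\<^sub>R u) (h *\<^sub>R u))) (at s within {0..t})"
      apply (rule has_derivative_compose[where f="\<lambda>s. x + s *\<^sub>R u", unfolded o_def])
       apply (auto intro!: derivative_eq_intros)[1]
      using Df inS[OF that, of 0] t(1) by auto
    have lin1: "linear (Df (x + s *\<^sub>R u + t *\<^sub>R v))" "linear (Df (x + s *\<^sub>R u))"
      using Df inS[OF that, of t] inS[OF that, of 0] t(1) has_derivative_linear by auto
    show ?thesis
      unfolding G_def G'_def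
      using has_derivative_diff[OF d1 d2]
      by (simp add: linear_cmul[OF lin1(1)] linear_cmul[OF lin1(2)] right_diff_distrib)
  qed
  obtain s where s: "s \<in> {0<..<t}" "G t - G 0 = G' s (t - 0)"
    using mvt_simple[of 0 t G G'] Gd t(1) by auto
  have Geq: "G t - G 0 = f (x + t *\<^sub>R u + t *\<^sub>R v) - f (x + t *\<^sub>R u) - f (x + t *\<^sub>R v) + f x"
    by (simp add: G_def)
  define z1 where "z1 = x + s *\<^sub>R u + t *\<^sub>R v"
  define z2 where "z2 = x + s *\<^sub>R u"
  have n1: "norm (z1 - x) \<le> t * (norm u + norm v)"
  proof -
    have "norm (z1 - x) \<le> s * norm u + t * norm v"
      unfolding z1_def using s t(1) by (simp add: norm_triangle_le)
    also have "\<dots> \<le> t * (norm u + norm v)" using s by (simp add: distrib_left mult_right_mono)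
    finally show ?thesis .
  qed
  have n2: "norm (z2 - x) \<le> t * norm u"
    unfolding z2_def using s by (simp add: mult_right_mono)
  have nn: "norm u \<le> norm u + norm v" by simp
  have "t * norm u \<le> t * (norm u + norm v)" using t(1) by (simp add: mult_left_mono)
  then have n2': "norm (z2 - x) < d" using n2 t by linarith
  have n1': "norm (z1 - x) < d" using n1 t by linarith
  have E1: "\<bar>Df z1 u - Df x u - L1 (z1 - x)\<bar> \<le> e * (t * (norm u + norm v))"
    using est n1' n1 e by (meson mult_left_mono order_trans)
  have E2: "\<bar>Df z2 u - Df x u - L1 (z2 - x)\<bar> \<le> e * (t * norm u)"
    using est n2' n2 e by (meson mult_left_mono order_trans)
  have L1d: "L1 (z1 - x) - L1 (z2 - x) = t * L1 v"
    unfolding z1_def z2_def using L1 by (simp add: linear_add linear_cmul)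
  have "G' s (t - 0) = t * (Df z1 u - Df z2 u)"
    unfolding G'_def z1_def z2_def by simp
  also have "\<dots> = t * ((Df z1 u - Df x u - L1 (z1 - x)) - (Df z2 u - Df x u - L1 (z2 - x)) + t * L1 v)"
    using L1d by (simp add: algebra_simps)
  finally have "G' s (t - 0) = t * ((Df z1 u - Df x u - L1 (z1 - x)) - (Df z2 u - Df x u - L1 (z2 - x)) + t * L1 v)" .
  then have "G' s (t - 0) - t^2 * L1 v = t * ((Df z1 u - Df x u - L1 (z1 - x)) - (Df z2 u - Df x u - L1 (z2 - x)))"
    by (simp add: power2_eq_square algebra_simps)
  then have "\<bar>G' s (t - 0) - t^2 * L1 v\<bar> = t * \<bar>(Df z1 u - Df x u - L1 (z1 - x)) - (Df z2 u - Df x u - L1 (z2 - x))\<bar>"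
    using t(1) by (simp add: abs_mult)
  also have "\<dots> \<le> t * (e * (t * (norm u + norm v)) + e * (t * norm u))"
    using E1 E2 t(1) by (intro mult_left_mono) (auto simp: abs_diff_le_iff abs_le_iff)
  also have "\<dots> = e * t^2 * (2 * norm u + norm v)"
    by (simp add: power2_eq_square algebra_simps)
  finally show ?thesis using s(2) Geq by simp
qed

lemma schwarz:
  fixes f :: "'a::real_normed_vector \<Rightarrow> real"
  assumes S: "open S" "x \<in> S" and Df: "\<forall>y\<in>S. (f has_derivative Df y) (at y)"
    and D1: "((\<lambda>y. Df y u) has_derivative L1) (at x)"
    and D2: "((\<lambda>y. Df y v) has_derivative L2) (at x)"
  shows "L1 v = L2 u"
proof (rule ccontr)
  assume ne: "L1 v \<noteq> L2 u"
  define \<delta> where "\<delta> = \<bar>L1 v - L2 u\<bar>"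
  have \<delta>: "\<delta> > 0" using ne by (simp add: \<delta>_def)
  define e where "e = \<delta> / (6 * (norm u + norm v) + 1)"
  have pos: "6 * (norm u + norm v) + 1 > 0" by (simp add: add_nonneg_pos)
  have e: "e > 0" using \<delta> pos by (simp add: e_def)
  have lin1: "linear L1" and lin2: "linear L2"
    using D1 D2 has_derivative_linear by auto
  obtain d1 where d1: "d1 > 0" "\<forall>z. norm (z - x) < d1 \<longrightarrow> \<bar>Df z u - Df x u - L1 (z - x)\<bar> \<le> e * norm (z - x)"
    using D1 e unfolding has_derivative_at_alt real_norm_def by blast
  obtain d2 where d2: "d2 > 0" "\<forall>z. norm (z - x) < d2 \<longrightarrow> \<bar>Df z v - Df x v - L2 (z - x)\<bar> \<le> e * norm (z - x)"
    using D2 e unfolding has_derivative_at_alt real_norm_def by blast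
  obtain r where r: "r > 0" "ball x r \<subseteq> S" using S open_contains_ball by blast
  define m where "m = min d1 (min d2 r)"
  have m: "m > 0" "m \<le> d1" "m \<le> d2" "m \<le> r" using d1 d2 r by (auto simp: m_def)
  define t where "t = m / (norm u + norm v + 1)"
  have t0: "t > 0" using m by (simp add: t_def add_nonneg_pos)
  have tm: "t * (norm u + norm v) < m"
  proof -
    have "t * (norm u + norm v) < t * (norm u + norm v + 1)" using t0 by simp
    also have "\<dots> = m" unfolding t_def
      by (metis add_nonneg_pos nonzero_eq_divide_eq norm_ge_zero zero_less_one add_nonneg_nonneg order_less_irrefl mult.commute)
    finally show ?thesis .
  qed
  have tm': "t * (norm v + norm u) < m" using tm by (simp add: add.commute)
  have E1: "\<bar>(f (x + t *\<^sub>R u + t *\<^sub>R v) - f (x + t *\<^sub>R u) - f (x + t *\<^sub>R v) + f x) - t^2 * L1 v\<bar>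
           \<le> e * t^2 * (2 * norm u + norm v)"
    by (rule schwarz_est[OF r(2) Df lin1 d1(2) t0]) (use tm m e in auto)
  have E2: "\<bar>(f (x + t *\<^sub>R v + t *\<^sub>R u) - f (x + t *\<^sub>R v) - f (x + t *\<^sub>R u) + f x) - t^2 * L2 u\<bar>
           \<le> e * t^2 * (2 * norm v + norm u)"
    by (rule schwarz_est[OF r(2) Df lin2 d2(2) t0]) (use tm' m e in auto)
  have sw: "x + t *\<^sub>R v + t *\<^sub>R u = x + t *\<^sub>R u + t *\<^sub>R v" by (simp add: algebra_simps)
  have "t^2 * \<delta> \<le> e * t^2 * (2 * norm u + norm v) + e * t^2 * (2 * norm v + norm u)"
  proof -
    have "t^2 * \<delta> = \<bar>t^2 * L1 v - t^2 * L2 u\<bar>"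
      by (simp add: \<delta>_def abs_mult right_diff_distrib[symmetric])
    then show ?thesis using E1 E2 unfolding sw by linarith
  qed
  also have "\<dots> = t^2 * (e * (3 * (norm u + norm v)))" by (simp add: algebra_simps)
  finally have "\<delta> \<le> e * (3 * (norm u + norm v))" using t0 by simp
  moreover have "e * (3 * (norm u + norm v)) < \<delta>"
  proof -
    have "e * (3 * (norm u + norm v)) \<le> e * (6 * (norm u + norm v) + 1)"
      using e by (intro mult_left_mono) auto
    also have "\<dots> = \<delta>" unfolding e_def using pos by simp
    finally have "e * (3 * (norm u + norm v)) \<le> \<delta>" .
    moreover have "e * (3 * (norm u + norm v)) \<noteq> \<delta>"
    proof
      assume "e * (3 * (norm u + norm v)) = \<delta>"
      then have "e * (3 * (norm u + norm v)) = e * (6 * (norm u + norm v) + 1)"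
        unfolding e_def using pos by simp
      then have "3 * (norm u + norm v) = 6 * (norm u + norm v) + 1" using e by simp
      then show False by (smt (verit) norm_ge_zero)
    qed
    ultimately show ?thesis by simp
  qed
  ultimately show False by simp
qed


definition ixn :: "('n \<Rightarrow> nat) \<Rightarrow> nat \<Rightarrow> 'n" where
  "ixn idx m = (THE p. idx p = m)"

lemma coord_ixn: "coord idx x m = x $ ixn idx m"
  by (simp add: coord_def ixn_def)

lemma label_cases:
  fixes m k :: nat
  assumes "m < 3*k+2"
  obtains (U) "m \<le> k" | (V) c where "c \<le> k" "m = k+1+c" | (S) i where "1 \<le> i" "i \<le> k" "m = 2*k+1+i"
proof -
  consider "m \<le> k" | "k < m \<and> m \<le> 2*k+1" | "2*k+1 < m" by linarith
  then show ?thesis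
  proof cases
    case 1 then show ?thesis using U by blast
  next
    case 2 then show ?thesis using V[of "m - (k+1)"] by auto
  next
    case 3 then show ?thesis using S[of "m - (2*k+1)"] assms by auto
  qed
qed

context
  fixes k :: nat and idx :: "'n::finite \<Rightarrow> nat"
  assumes bij: "bij_betw idx UNIV {..<3*k+2}"
begin

lemma idx_lt: "idx p < 3*k+2"
  using bij by (auto simp: bij_betw_def)

lemma idx_inj: "idx p = idx q \<longleftrightarrow> p = q"
  using bij by (auto simp: bij_betw_def inj_def)

lemma idx_ixn: "m < 3*k+2 \<Longrightarrow> idx (ixn idx m) = m"
proof -
  assume "m < 3*k+2"
  then obtain p where p: "idx p = m" using bij by (metis bij_betw_def imageE lessThan_iff)
  then have "ixn idx m = p" unfolding ixn_def by (rule the_equality) (use idx_inj p in auto)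
  then show ?thesis using p by simp
qed

lemma ixn_idx: "ixn idx (idx p) = p"
  unfolding ixn_def by (rule the_equality) (use idx_inj in auto)

lemma ixn_eq_iff: "m < 3*k+2 \<Longrightarrow> m' < 3*k+2 \<Longrightarrow> ixn idx m = ixn idx m' \<longleftrightarrow> m = m'"
  by (metis idx_ixn)

lemma eq_ixn_iff: "m < 3*k+2 \<Longrightarrow> p = ixn idx m \<longleftrightarrow> idx p = m"
  by (metis idx_ixn ixn_idx)

lemma sum_ixn_delta:
  assumes "m < 3*k+2" "\<And>p. idx p \<noteq> m \<Longrightarrow> f p = 0"
  shows "(\<Sum>p\<in>UNIV. f p) = f (ixn idx m)"
proof -
  have "(\<Sum>p\<in>UNIV. f p) = (\<Sum>p\<in>UNIV. if p = ixn idx m then f p else 0)"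
    by (rule sum.cong) (use assms eq_ixn_iff in auto)
  then show ?thesis by simp
qed


end

lemma vec_sum_axis': "(w::real^'n) = (\<Sum>p\<in>UNIV. (w $ p) *\<^sub>R axis p 1)"
  using vec_sum_axis[of "\<lambda>p. w $ p"] by (simp add: vec_nth_inverse)

lemma linear_axis_expand:
  assumes "linear (f :: real^'n \<Rightarrow> real^'n)"
  shows "f w = (\<Sum>p\<in>UNIV. (w $ p) *\<^sub>R f (axis p 1))"
  by (subst vec_sum_axis') (simp add: linear_sum[OF assms] linear_cmul[OF assms])

lemma sum_delta_outer: "(\<Sum>i\<in>(UNIV::'n::finite set). \<Sum>j\<in>(UNIV::'m::finite set). if i = r then f j else 0) = (\<Sum>j\<in>UNIV. f j)"
proof -
  have "(\<Sum>i\<in>(UNIV::'n set). \<Sum>j\<in>(UNIV::'m set). if i = r then f j else 0) = (\<Sum>i\<in>(UNIV::'n set). if i = r then (\<Sum>j\<in>UNIV. f j) else 0)"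
    by (rule sum.cong) auto
  then show ?thesis by simp
qed

lemma bilin_axis_left: "bilin G (axis r 1) w = (\<Sum>j\<in>UNIV. G $ r $ j * w $ j)"
  unfolding bilin_def axis_def
  by (simp add: if_distrib[of "\<lambda>x. x * _"] sum_delta_outer cong: if_cong)

lemma bilin_axis_right: "bilin G v (axis s 1) = (\<Sum>i\<in>UNIV. v $ i * G $ i $ s)"
  unfolding bilin_def axis_def
  by (simp add: if_distrib[of "\<lambda>x. _ * x"] cong: if_cong)


context
  fixes k :: nat and idx :: "'n::finite \<Rightarrow> nat"
  assumes bij: "bij_betw idx UNIV {..<3*k+2}"
begin

lemma final_LA:
  fixes Pi :: "real^'n \<Rightarrow> real^'n" and G :: "real^'n^'n" and eps :: "nat \<Rightarrow> real" and lam :: real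
  assumes lin: "linear Pi" and idem: "\<And>x. Pi (Pi x) = Pi x"
   and GV: "\<And>a q. a \<le> k \<Longrightarrow> G $ ixn idx (k+1+a) $ q = (if q = ixn idx a then 1 else 0)"
   and GS: "\<And>i q. 1 \<le> i \<Longrightarrow> i \<le> k \<Longrightarrow> G $ ixn idx (2*k+1+i) $ q = (if q = ixn idx (2*k+1+i) then eps i else 0)"
   and Gsym: "\<And>p q. G $ p $ q = G $ q $ p"
   and sa: "\<And>x y. bilin G (Pi x) y = bilin G x (Pi y)"
   and RU: "\<And>a r. a \<le> k \<Longrightarrow> Pi (axis r 1) $ ixn idx a = (if r = ixn idx a then lam else 0)"
   and RS: "\<And>i r. 1 \<le> i \<Longrightarrow> i \<le> k \<Longrightarrow> Pi (axis r 1) $ ixn idx (2*k+1+i) = (if r = ixn idx (2*k+1+i) then lam else 0)"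
  shows "Pi = id \<or> Pi = (\<lambda>x. 0)"
proof -
  let ?ix = "ixn idx"
  note ix_eq = ixn_eq_iff[OF bij]
  have inj: "?ix m = ?ix m' \<longleftrightarrow> m = m'" if "m < 3*k+2" "m' < 3*k+2" for m m'
    using ix_eq that by blast
  have pcases: "P p" if "\<And>a. a \<le> k \<Longrightarrow> p = ?ix a \<Longrightarrow> P p" "\<And>c. c \<le> k \<Longrightarrow> p = ?ix (k+1+c) \<Longrightarrow> P p"
      "\<And>i. 1 \<le> i \<Longrightarrow> i \<le> k \<Longrightarrow> p = ?ix (2*k+1+i) \<Longrightarrow> P p" for P p
  proof -
    have p: "p = ?ix (idx p)" using ixn_idx[OF bij] by simp
    show ?thesis using idx_lt[OF bij, of p]
      by (cases rule: label_cases) (use that p in metis)+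
  qed
  have st1: "Pi (axis (?ix (k+1+a)) 1) $ ?ix (k+1+b) = (if a = b then lam else 0)" if ab: "a \<le> k" "b \<le> k" for a b
  proof -
    have L: "bilin G (Pi (axis (?ix b) 1)) (axis (?ix (k+1+a)) 1) = (if a = b then lam else 0)"
    proof -
      have "bilin G (Pi (axis (?ix b) 1)) (axis (?ix (k+1+a)) 1) = (\<Sum>i\<in>UNIV. Pi (axis (?ix b) 1) $ i * G $ ?ix (k+1+a) $ i)"
        by (simp add: bilin_axis_right Gsym)
      also have "\<dots> = Pi (axis (?ix b) 1) $ ?ix a"
        by (simp only: GV[OF ab(1)]) (simp add: if_distrib[of "\<lambda>x. _ * x"] cong: if_cong)
      also have "\<dots> = (if a = b then lam else 0)" using RU[of a "?ix b"] ab inj[of b a] by auto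
      finally show ?thesis .
    qed
    have R: "bilin G (axis (?ix b) 1) (Pi (axis (?ix (k+1+a)) 1)) = Pi (axis (?ix (k+1+a)) 1) $ ?ix (k+1+b)"
    proof -
      have "bilin G (axis (?ix b) 1) (Pi (axis (?ix (k+1+a)) 1)) = (\<Sum>j\<in>UNIV. G $ ?ix b $ j * Pi (axis (?ix (k+1+a)) 1) $ j)"
        by (simp add: bilin_axis_left)
      also have "\<dots> = G $ ?ix b $ ?ix (k+1+b) * Pi (axis (?ix (k+1+a)) 1) $ ?ix (k+1+b)"
      proof (rule sum_ixn_delta[OF bij])
        show "k+1+b < 3*k+2" using ab by simp
        fix p assume np: "idx p \<noteq> k+1+b"
        show "G $ ?ix b $ p * Pi (axis (?ix (k+1+a)) 1) $ p = 0"
        proof (rule pcases[where p=p])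
          fix c assume "c \<le> k" "p = ?ix c"
          then show ?thesis using RU[of c] inj[of "k+1+a" c] ab by auto
        next
          fix c assume c: "c \<le> k" "p = ?ix (k+1+c)"
          then have "c \<noteq> b" using np idx_ixn[OF bij, of "k+1+c"] by auto
          then show ?thesis using c GV[of c] Gsym inj[of b c] ab by auto
        next
          fix i assume i: "1 \<le> i" "i \<le> k" "p = ?ix (2*k+1+i)"
          then show ?thesis using GS[of i] Gsym inj[of b "2*k+1+i"] ab by auto
        qed
      qed
      also have "\<dots> = Pi (axis (?ix (k+1+a)) 1) $ ?ix (k+1+b)"
        using GV[of b] Gsym ab by simp
      finally show ?thesis .
    qed
    show ?thesis using L R sa by metis
  qed
  have st2: "Pi (axis (?ix (2*k+1+i)) 1) $ ?ix (k+1+b) = 0" if ib: "1 \<le> i" "i \<le> k" "b \<le> k" for i b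
  proof -
    have L: "bilin G (Pi (axis (?ix b) 1)) (axis (?ix (2*k+1+i)) 1) = 0"
    proof -
      have "bilin G (Pi (axis (?ix b) 1)) (axis (?ix (2*k+1+i)) 1) = (\<Sum>j\<in>UNIV. Pi (axis (?ix b) 1) $ j * G $ ?ix (2*k+1+i) $ j)"
        by (simp add: bilin_axis_right Gsym)
      also have "\<dots> = Pi (axis (?ix b) 1) $ ?ix (2*k+1+i) * eps i"
        by (simp only: GS[OF ib(1,2)]) (simp add: if_distrib[of "\<lambda>x. _ * x"] cong: if_cong)
      also have "\<dots> = 0" using RS[of i "?ix b"] ib inj[of b "2*k+1+i"] by auto
      finally show ?thesis .
    qed
    have R: "bilin G (axis (?ix b) 1) (Pi (axis (?ix (2*k+1+i)) 1)) = Pi (axis (?ix (2*k+1+i)) 1) $ ?ix (k+1+b)"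
    proof -
      have "bilin G (axis (?ix b) 1) (Pi (axis (?ix (2*k+1+i)) 1)) = (\<Sum>j\<in>UNIV. G $ ?ix b $ j * Pi (axis (?ix (2*k+1+i)) 1) $ j)"
        by (simp add: bilin_axis_left)
      also have "\<dots> = G $ ?ix b $ ?ix (k+1+b) * Pi (axis (?ix (2*k+1+i)) 1) $ ?ix (k+1+b)"
      proof (rule sum_ixn_delta[OF bij])
        show "k+1+b < 3*k+2" using ib by simp
        fix p assume np: "idx p \<noteq> k+1+b"
        show "G $ ?ix b $ p * Pi (axis (?ix (2*k+1+i)) 1) $ p = 0"
        proof (rule pcases[where p=p])
          fix c assume "c \<le> k" "p = ?ix c"
          then show ?thesis using RU[of c] inj[of "2*k+1+i" c] ib by auto
        next
          fix c assume c: "c \<le> k" "p = ?ix (k+1+c)"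
          then have "c \<noteq> b" using np idx_ixn[OF bij, of "k+1+c"] by auto
          then show ?thesis using c GV[of c] Gsym inj[of b c] ib by auto
        next
          fix j assume j: "1 \<le> j" "j \<le> k" "p = ?ix (2*k+1+j)"
          then show ?thesis using GS[of j] Gsym inj[of b "2*k+1+j"] ib by auto
        qed
      qed
      also have "\<dots> = Pi (axis (?ix (2*k+1+i)) 1) $ ?ix (k+1+b)"
        using GV[of b] Gsym ib by simp
      finally show ?thesis .
    qed
    show ?thesis using L R sa by metis
  qed
  have colV: "Pi (axis (?ix (k+1+a)) 1) = lam *\<^sub>R axis (?ix (k+1+a)) 1" if a: "a \<le> k" for a
  proof (subst vec_eq_iff, rule allI)
    fix p show "Pi (axis (?ix (k+1+a)) 1) $ p = (lam *\<^sub>R axis (?ix (k+1+a)) 1) $ p"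
    proof (rule pcases[where p=p])
      fix c assume "c \<le> k" "p = ?ix c"
      then show ?thesis using RU[of c] inj[of "k+1+a" c] a by (auto simp: axis_def)
    next
      fix c assume c: "c \<le> k" "p = ?ix (k+1+c)"
      then show ?thesis using st1[of a c] inj[of "k+1+a" "k+1+c"] a by (auto simp: axis_def)
    next
      fix j assume j: "1 \<le> j" "j \<le> k" "p = ?ix (2*k+1+j)"
      then show ?thesis using RS[of j] inj[of "k+1+a" "2*k+1+j"] a by (auto simp: axis_def)
    qed
  qed
  have colS: "Pi (axis (?ix (2*k+1+i)) 1) = lam *\<^sub>R axis (?ix (2*k+1+i)) 1" if i: "1 \<le> i" "i \<le> k" for i
  proof (subst vec_eq_iff, rule allI)
    fix p show "Pi (axis (?ix (2*k+1+i)) 1) $ p = (lam *\<^sub>R axis (?ix (2*k+1+i)) 1) $ p"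
    proof (rule pcases[where p=p])
      fix c assume "c \<le> k" "p = ?ix c"
      then show ?thesis using RU[of c] inj[of "2*k+1+i" c] i by (auto simp: axis_def)
    next
      fix c assume c: "c \<le> k" "p = ?ix (k+1+c)"
      then show ?thesis using st2[of i c] inj[of "2*k+1+i" "k+1+c"] i by (auto simp: axis_def)
    next
      fix j assume j: "1 \<le> j" "j \<le> k" "p = ?ix (2*k+1+j)"
      then show ?thesis using RS[of j] inj[of "2*k+1+i" "2*k+1+j"] i by (auto simp: axis_def)
    qed
  qed
  have colU: "Pi (axis (?ix a) 1) = lam *\<^sub>R axis (?ix a) 1 \<and> lam * lam = lam" if a: "a \<le> k" for a
  proof -
    define e :: "real^'n" where "e = axis (?ix a) 1"
    define w where "w = Pi e - lam *\<^sub>R e"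
    have w0: "w $ p = 0" if "\<And>c. c \<le> k \<Longrightarrow> p \<noteq> ?ix (k+1+c)" for p
    proof (rule pcases[where p=p])
      fix c assume "c \<le> k" "p = ?ix c"
      then show ?thesis using RU[of c] inj[of a c] a by (auto simp: axis_def w_def e_def)
    next
      fix c assume c: "c \<le> k" "p = ?ix (k+1+c)"
      then show ?thesis using that by auto
    next
      fix j assume j: "1 \<le> j" "j \<le> k" "p = ?ix (2*k+1+j)"
      then show ?thesis using RS[of j] inj[of a "2*k+1+j"] a by (auto simp: axis_def w_def e_def)
    qed
    have Pw: "Pi w = lam *\<^sub>R w"
    proof -
      have "Pi w = (\<Sum>p\<in>UNIV. (w $ p) *\<^sub>R Pi (axis p 1))" by (rule linear_axis_expand[OF lin])
      also have "\<dots> = (\<Sum>p\<in>UNIV. (w $ p) *\<^sub>R (lam *\<^sub>R axis p 1))"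
      proof (rule sum.cong[OF refl])
        fix p
        show "(w $ p) *\<^sub>R Pi (axis p 1) = (w $ p) *\<^sub>R (lam *\<^sub>R axis p 1)"
        proof (cases "\<exists>c. c \<le> k \<and> p = ?ix (k+1+c)")
          case True then show ?thesis using colV by auto
        next
          case False then show ?thesis using w0[of p] by auto
        qed
      qed
      also have "\<dots> = lam *\<^sub>R (\<Sum>p\<in>UNIV. (w $ p) *\<^sub>R axis p 1)"
        by (simp add: scaleR_sum_right mult.commute)
      also have "\<dots> = lam *\<^sub>R w" using vec_sum_axis'[of w] by simp
      finally show ?thesis .
    qed
    have Pe: "Pi e = lam *\<^sub>R e + w" by (simp add: w_def)
    have "Pi (lam *\<^sub>R e + w) = lam *\<^sub>R Pi e + lam *\<^sub>R w"
      by (simp add: linear_add[OF lin] linear_cmul[OF lin] Pw)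
    then have "Pi (Pi e) = lam *\<^sub>R (lam *\<^sub>R e + w) + lam *\<^sub>R w"
      by (simp only: Pe[symmetric])
    then have eq: "lam *\<^sub>R (lam *\<^sub>R e + w) + lam *\<^sub>R w = lam *\<^sub>R e + w" using idem[of e] Pe by simp
    have wa: "w $ ?ix a = 0" using w0 inj[of a] a by fastforce
    have ll: "lam * lam = lam" using arg_cong[OF eq, of "\<lambda>v. v $ ?ix a"] wa by (simp add: e_def)
    have l01: "lam = 0 \<or> lam = 1" using ll by (metis mult_cancel_right1 mult_zero_left)
    have "w = 0" using l01
    proof
      assume "lam = 0" then show ?thesis using eq by simp
    next
      assume "lam = 1" then show ?thesis using eq by simp
    qed
    then show ?thesis using Pe ll by (simp add: e_def)
  qed
  have ll: "lam * lam = lam" using colU[of 0] by simp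
  have col: "Pi (axis p 1) = lam *\<^sub>R axis p 1" for p
    by (rule pcases[where p=p]) (use colU colV colS in auto)
  have "Pi x = lam *\<^sub>R x" for x
  proof -
    have "Pi x = (\<Sum>p\<in>UNIV. (x $ p) *\<^sub>R (lam *\<^sub>R axis p 1))"
      using linear_axis_expand[OF lin, of x] by (simp add: col)
    also have "\<dots> = lam *\<^sub>R (\<Sum>p\<in>UNIV. (x $ p) *\<^sub>R axis p 1)"
      by (simp add: scaleR_sum_right mult.commute)
    finally show ?thesis using vec_sum_axis'[of x] by simp
  qed
  moreover have "lam = 0 \<or> lam = 1" using ll by (metis mult_cancel_right1 mult_zero_left)
  ultimately show ?thesis by auto
qed

end


lemma axis_comp: "axis i (1::real) $ j = (if j = i then 1 else 0)"
  by (simp add: axis_def)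

lemma rows1:
  fixes Pi :: "real^'n \<Rightarrow> real^'n" and B :: "real^'n \<Rightarrow> real^'n \<Rightarrow> real"
  assumes Bdef: "\<And>z w. B z w = c * (z $ p0 * w $ p1 - z $ p1 * w $ p0)"
    and c: "c \<noteq> 0" and p01: "p0 \<noteq> p1"
    and sa: "\<And>z w. B (Pi z) w = B z (Pi w)"
  shows "Pi (axis r 1) $ p0 = (if r = p0 then Pi (axis p0 1) $ p0 else 0)"
    and "Pi (axis r 1) $ p1 = (if r = p1 then Pi (axis p0 1) $ p0 else 0)"
proof -
  let ?pi = "\<lambda>r p. Pi (axis r 1) $ p"
  have a1: "?pi r p0 = 0" if "r \<noteq> p0" "r \<noteq> p1" for r
    using sa[of "axis r 1" "axis p1 1"] c that p01 unfolding Bdef by (simp add: axis_comp)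
  have a2: "?pi r p1 = 0" if "r \<noteq> p0" "r \<noteq> p1" for r
    using sa[of "axis r 1" "axis p0 1"] c that p01 unfolding Bdef by (simp add: axis_comp)
  have a3: "?pi p1 p0 = 0"
    using sa[of "axis p1 1" "axis p1 1"] c p01 unfolding Bdef by (simp add: axis_comp)
  have a4: "?pi p0 p1 = 0"
    using sa[of "axis p0 1" "axis p0 1"] c p01 unfolding Bdef by (simp add: axis_comp)
  have a5: "?pi p1 p1 = ?pi p0 p0"
    using sa[of "axis p0 1" "axis p1 1"] c p01 unfolding Bdef by (simp add: axis_comp)
  show "Pi (axis r 1) $ p0 = (if r = p0 then Pi (axis p0 1) $ p0 else 0)"
    using a1 a3 by auto
  show "Pi (axis r 1) $ p1 = (if r = p1 then Pi (axis p0 1) $ p0 else 0)"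
  proof (cases "r = p0")
    case True then show ?thesis using a4 p01 by simp
  next
    case False then show ?thesis using a2[of r] a5 by (cases "r = p1") simp_all
  qed
qed

lemma rows2:
  fixes Pi :: "real^'n \<Rightarrow> real^'n" and B :: "real^'n \<Rightarrow> real^'n \<Rightarrow> real"
  assumes Bdef: "\<And>z w. B z w = a * (z $ p1 * w $ p2 - z $ p2 * w $ p1) + b * (z $ p1 * w $ p0 - z $ p0 * w $ p1)"
    and a: "a \<noteq> 0" and d: "p0 \<noteq> p1" "p1 \<noteq> p2" "p0 \<noteq> p2"
    and sa: "\<And>z w. B (Pi z) w = B z (Pi w)"
    and r0: "\<And>r. Pi (axis r 1) $ p0 = (if r = p0 then lam else 0)"
    and r1: "\<And>r. Pi (axis r 1) $ p1 = (if r = p1 then lam else 0)"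
  shows "Pi (axis r 1) $ p2 = (if r = p2 then lam else 0)"
proof -
  let ?pi = "\<lambda>r p. Pi (axis r 1) $ p"
  have eq: "B (Pi (axis r 1)) (axis p1 1) = B (axis r 1) (Pi (axis p1 1))" by (rule sa)
  show ?thesis
  proof (cases "r = p1")
    case True
    then show ?thesis using eq a d unfolding Bdef by (simp add: axis_comp r0 r1)
  next
    case False
    then show ?thesis using eq a d unfolding Bdef by (cases "r = p0") (auto simp: axis_comp r0 r1)
  qed
qed


lemma Rn_0i:
  assumes "1 \<le> i" "i \<le> k"
  shows "Rn k 0 i c d = (if c = i \<and> d = 2*k+1+i then 1 else 0) - (if c = 2*k+1+i \<and> d = i then 1 else 0)"
proof -
  have "Rn k 0 i c d = (\<Sum>j=1..k. if j = i then (if c = i \<and> d = 2*k+1+i then 1 else 0) - (if c = 2*k+1+i \<and> d = i then 1 else 0) else 0)"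
    unfolding Rn_def Let_def
    by (rule sum.cong[OF refl]) (auto simp: ind4_def)
  then show ?thesis using assms by simp
qed

lemma Rn_iS:
  assumes "1 \<le> i" "i \<le> k"
  shows "Rn k i (2*k+1+i) c d = (if c = 0 \<and> d = i then 1 else 0) - (if c = i \<and> d = 0 then 1 else 0)"
proof -
  have "Rn k i (2*k+1+i) c d = (\<Sum>j=1..k. if j = i then (if c = 0 \<and> d = i then 1 else 0) - (if c = i \<and> d = 0 then 1 else 0) else 0)"
    unfolding Rn_def Let_def
    by (rule sum.cong[OF refl]) (auto simp: ind4_def)
  then show ?thesis using assms by simp
qed

lemma sum2_delta:
  "(\<Sum>pa\<in>(UNIV::'n::finite set). \<Sum>qa\<in>(UNIV::'m::finite set). if pa = p \<and> qa = q then C pa qa else 0) = (C p q :: real)"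
proof -
  have "\<And>pa. (\<Sum>qa\<in>(UNIV::'m set). if pa = p \<and> qa = q then C pa qa else 0) = (if pa = p then C pa q else 0)"
    by (case_tac "pa = p") simp_all
  then show ?thesis by simp
qed

lemma model_R_axis:
  "model_R k idx (axis p 1) (axis q 1) z w = (\<Sum>r\<in>UNIV. \<Sum>s\<in>UNIV. Rn k (idx p) (idx q) (idx r) (idx s) * z $ r * w $ s)"
proof -
  have "\<And>pa qa. (\<Sum>r\<in>UNIV. \<Sum>s\<in>UNIV. Rn k (idx pa) (idx qa) (idx r) (idx s) * axis p 1 $ pa * axis q 1 $ qa * z $ r * w $ s)
     = (if pa = p \<and> qa = q then (\<Sum>r\<in>UNIV. \<Sum>s\<in>UNIV. Rn k (idx pa) (idx qa) (idx r) (idx s) * z $ r * w $ s) else 0)"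
    by (auto simp: axis_comp)
  then show ?thesis unfolding model_R_def by (simp add: sum2_delta)
qed

lemma bilin_add_left: "bilin G (x + y) z = bilin G x z + bilin G y z"
  unfolding bilin_def by (simp add: distrib_right sum.distrib)
lemma bilin_add_right: "bilin G x (y + z) = bilin G x y + bilin G x z"
  unfolding bilin_def by (simp add: distrib_left sum.distrib)
lemma bilin_diff_left: "bilin G (x - y) z = bilin G x z - bilin G y z"
  unfolding bilin_def by (simp add: left_diff_distrib sum_subtractf)
lemma bilin_diff_right: "bilin G x (y - z) = bilin G x y - bilin G x z"
  unfolding bilin_def by (simp add: right_diff_distrib sum_subtractf)
lemma bilin_sym: "(\<And>p q. G $ p $ q = G $ q $ p) \<Longrightarrow> bilin G x y = bilin G y x"
  unfolding bilin_def by (subst sum.swap) (simp add: mult.commute mult.left_commute)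

context
  fixes k :: nat and idx :: "'n::finite \<Rightarrow> nat"
  assumes bij: "bij_betw idx UNIV {..<3*k+2}"
begin

lemma sum_pair_delta:
  assumes "m1 < 3*k+2" "m2 < 3*k+2"
  shows "(\<Sum>r\<in>UNIV. \<Sum>s\<in>UNIV. (if idx r = m1 \<and> idx s = m2 then 1 else 0) * (z::real^'n) $ r * w $ s)
       = z $ ixn idx m1 * w $ ixn idx m2"
proof -
  have "(\<Sum>r\<in>UNIV. \<Sum>s\<in>UNIV. (if idx r = m1 \<and> idx s = m2 then 1 else 0) * z $ r * w $ s)
      = (\<Sum>r\<in>UNIV. if r = ixn idx m1 then (\<Sum>s\<in>UNIV. if s = ixn idx m2 then z $ r * w $ s else 0) else 0)"
    by (rule sum.cong[OF refl]) (auto simp: eq_ixn_iff[OF bij assms(1)] eq_ixn_iff[OF bij assms(2)] intro!: sum.cong)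
  then show ?thesis by simp
qed

lemma sum_pair_delta2:
  assumes "m1 < 3*k+2" "m2 < 3*k+2"
  shows "(\<Sum>r\<in>UNIV. \<Sum>s\<in>UNIV. ((if idx r = m1 \<and> idx s = m2 then 1 else 0) - (if idx r = m2 \<and> idx s = m1 then 1 else 0)) * (z::real^'n) $ r * w $ s)
       = z $ ixn idx m1 * w $ ixn idx m2 - z $ ixn idx m2 * w $ ixn idx m1"
  using sum_pair_delta[OF assms, of z w] sum_pair_delta[OF assms(2,1), of z w]
  by (simp add: left_diff_distrib sum_subtractf)

lemma B1_formula:
  assumes "1 \<le> i" "i \<le> k"
  shows "model_R k idx (axis (ixn idx 0) 1) (axis (ixn idx i) 1) z w
       = z $ ixn idx i * w $ ixn idx (2*k+1+i) - z $ ixn idx (2*k+1+i) * w $ ixn idx i"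
proof -
  have l: "0 < 3*k+2" "i < 3*k+2" "2*k+1+i < 3*k+2" using assms by auto
  show ?thesis
    unfolding model_R_axis idx_ixn[OF bij l(1)] idx_ixn[OF bij l(2)] Rn_0i[OF assms]
    by (rule sum_pair_delta2) (use l in auto)
qed

lemma B2_formula:
  assumes "1 \<le> i" "i \<le> k"
  shows "model_R k idx (axis (ixn idx i) 1) (axis (ixn idx (2*k+1+i)) 1) z w
       = z $ ixn idx 0 * w $ ixn idx i - z $ ixn idx i * w $ ixn idx 0"
proof -
  have l: "0 < 3*k+2" "i < 3*k+2" "2*k+1+i < 3*k+2" using assms by auto
  show ?thesis
    unfolding model_R_axis idx_ixn[OF bij l(3)] idx_ixn[OF bij l(2)] Rn_iS[OF assms]
    by (rule sum_pair_delta2) (use l in auto)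
qed



lemma part1:
  fixes eps :: "nat \<Rightarrow> real"
  assumes k1: "k \<ge> 1" and eps: "\<forall>i\<in>{1..k}. eps i = 1 \<or> eps i = -1"
  shows "\<not> decomposable_model (model_ip k idx eps) (model_R k idx)"
proof
  assume "decomposable_model (model_ip k idx eps) (model_R k idx)"
  then obtain W1 W2 T1 T2 where
    W: "subspace W1" "subspace W2" "W1 \<noteq> {0}" "W2 \<noteq> {0}" "W1 \<inter> W2 = {0}"
    and sp: "{x + y | x y. x \<in> W1 \<and> y \<in> W2} = UNIV"
    and orth: "\<forall>x\<in>W1. \<forall>y\<in>W2. model_ip k idx eps x y = 0"
    and T: "\<forall>x1\<in>W1. \<forall>y1\<in>W1. \<forall>z1\<in>W1. \<forall>w1\<in>W1. \<forall>x2\<in>W2. \<forall>y2\<in>W2. \<forall>z2\<in>W2. \<forall>w2\<in>W2.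
         model_R k idx (x1 + x2) (y1 + y2) (z1 + z2) (w1 + w2) = T1 x1 y1 z1 w1 + T2 x2 y2 z2 w2"
    unfolding decomposable_model_def by blast
  let ?T = "model_R k idx"
  let ?ix = "ixn idx"
  define Pi where "Pi x = (THE x1. x1 \<in> W1 \<and> x - x1 \<in> W2)" for x :: "real^'n"
  have uniq: "x1 = x1'" if "x1 \<in> W1" "x - x1 \<in> W2" "x1' \<in> W1" "x - x1' \<in> W2" for x x1 x1'
  proof -
    have "x1 - x1' \<in> W1" using that W(1) by (simp add: subspace_diff)
    moreover have "(x - x1') - (x - x1) \<in> W2" by (rule subspace_diff[OF W(2)]) (use that in auto)
    then have "x1 - x1' \<in> W2" by simp
    ultimately have "x1 - x1' \<in> W1 \<inter> W2" by simp
    then show ?thesis using W(5) by simp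
  qed
  have ex: "\<exists>x1. x1 \<in> W1 \<and> x - x1 \<in> W2" for x
  proof -
    have "x \<in> {x + y | x y. x \<in> W1 \<and> y \<in> W2}" using sp by simp
    then obtain a b where "x = a + b" "a \<in> W1" "b \<in> W2" by blast
    then show ?thesis by (intro exI[of _ a]) simp
  qed
  have PiW: "Pi x \<in> W1 \<and> x - Pi x \<in> W2" for x
    unfolding Pi_def by (rule theI') (use ex uniq in blast)
  have Pi_eq: "Pi x = x1" if "x1 \<in> W1" "x - x1 \<in> W2" for x x1
    using uniq[OF PiW[THEN conjunct1] PiW[THEN conjunct2] that] .
  have lin: "linear Pi"
  proof (rule linearI)
    fix x y
    have a: "Pi x + Pi y \<in> W1" by (rule subspace_add[OF W(1)]) (use PiW in auto)
    have "(x - Pi x) + (y - Pi y) \<in> W2" by (rule subspace_add[OF W(2)]) (use PiW in auto)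
    then have b: "(x + y) - (Pi x + Pi y) \<in> W2" by (simp add: algebra_simps)
    show "Pi (x + y) = Pi x + Pi y" by (rule Pi_eq[OF a b])
  next
    fix c :: real and x
    have a: "c *\<^sub>R Pi x \<in> W1" by (rule subspace_scale[OF W(1)]) (use PiW in auto)
    have "c *\<^sub>R (x - Pi x) \<in> W2" by (rule subspace_scale[OF W(2)]) (use PiW in auto)
    then have b: "c *\<^sub>R x - c *\<^sub>R Pi x \<in> W2" by (simp add: scaleR_diff_right)
    show "Pi (c *\<^sub>R x) = c *\<^sub>R Pi x" by (rule Pi_eq[OF a b])
  qed
  have idem: "Pi (Pi x) = Pi x" for x
    by (rule Pi_eq) (use PiW W(2) subspace_0 in auto)
  define G :: "real^'n^'n" where "G = (\<chi> p q. Gm k eps (idx p) (idx q))"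
  have ip: "model_ip k idx eps x y = bilin G x y" for x y
    by (simp add: model_ip_def bilin_def G_def)
  have Gsym: "G $ p $ q = G $ q $ p" for p q
    by (auto simp: G_def Gm_def)
  have sa: "bilin G (Pi x) y = bilin G x (Pi y)" for x y
  proof -
    have o1: "bilin G (Pi x) (y - Pi y) = 0" using orth PiW ip by simp
    have o2: "bilin G (x - Pi x) (Pi y) = 0" using orth PiW ip bilin_sym[OF Gsym] by metis
    have "bilin G (Pi x) y = bilin G (Pi x) (Pi y)" using o1 by (simp add: bilin_diff_right)
    also have "\<dots> = bilin G x (Pi y)" using o2 by (simp add: bilin_diff_left)
    finally show ?thesis .
  qed
  have T0: "?T 0 0 0 0 = 0" by (simp add: model_R_def)
  have Tsplit: "?T (x1 + x2) (y1 + y2) (z1 + z2) (w1 + w2) = ?T x1 y1 z1 w1 + ?T x2 y2 z2 w2"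
    if "x1 \<in> W1" "y1 \<in> W1" "z1 \<in> W1" "w1 \<in> W1" "x2 \<in> W2" "y2 \<in> W2" "z2 \<in> W2" "w2 \<in> W2"
    for x1 y1 z1 w1 x2 y2 z2 w2
  proof -
    have z1: "0 \<in> W1" and z2: "0 \<in> W2" using W subspace_0 by auto
    have a: "?T (x1 + x2) (y1 + y2) (z1 + z2) (w1 + w2) = T1 x1 y1 z1 w1 + T2 x2 y2 z2 w2" using T that by blast
    have b: "?T x1 y1 z1 w1 = T1 x1 y1 z1 w1 + T2 0 0 0 0" using T that z2 by (metis add.right_neutral)
    have c: "?T x2 y2 z2 w2 = T1 0 0 0 0 + T2 x2 y2 z2 w2" using T that z1 by (metis add.left_neutral)
    have d: "?T 0 0 0 0 = T1 0 0 0 0 + T2 0 0 0 0" using T z1 z2 by (metis add.right_neutral)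
    show ?thesis using a b c d T0 by simp
  qed
  have Tdec: "?T x y z w = ?T (Pi x) (Pi y) (Pi z) (Pi w) + ?T (x - Pi x) (y - Pi y) (z - Pi z) (w - Pi w)" for x y z w
    using Tsplit[of "Pi x" "Pi y" "Pi z" "Pi w" "x - Pi x" "y - Pi y" "z - Pi z" "w - Pi w"] PiW by simp
  have T3: "?T x y 0 w = 0" for x y w by (simp add: model_R_def)
  have T4: "?T x y z 0 = 0" for x y z by (simp add: model_R_def)
  have comm: "?T x y (Pi z) w = ?T x y z (Pi w)" for x y z w
    using Tdec[of x y "Pi z" w] Tdec[of x y z "Pi w"] idem T3 T4 by simp
  define lam where "lam = Pi (axis (?ix 0) 1) $ ?ix 0"
  have lt: "m < 3*k+2" if "m \<le> k" for m using that by simp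
  have d0: "?ix 0 \<noteq> ?ix i" "?ix i \<noteq> ?ix (2*k+1+i)" "?ix 0 \<noteq> ?ix (2*k+1+i)" if "1 \<le> i" "i \<le> k" for i
    using that ixn_eq_iff[OF bij] by (simp_all add: ixn_eq_iff[OF bij])
  have R1: "Pi (axis r 1) $ ?ix 0 = (if r = ?ix 0 then lam else 0) \<and> Pi (axis r 1) $ ?ix i = (if r = ?ix i then lam else 0)"
    if i: "1 \<le> i" "i \<le> k" for i r
  proof -
    have Bd: "?T (axis (?ix i) 1) (axis (?ix (2*k+1+i)) 1) z w = 1 * (z $ ?ix 0 * w $ ?ix i - z $ ?ix i * w $ ?ix 0)" for z w
      using B2_formula[OF i] by simp
    show ?thesis using rows1[OF Bd _ d0(1)[OF i], of Pi r] comm i unfolding lam_def by auto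
  qed
  have R2: "Pi (axis r 1) $ ?ix (2*k+1+i) = (if r = ?ix (2*k+1+i) then lam else 0)"
    if i: "1 \<le> i" "i \<le> k" for i r
  proof -
    have Bd: "?T (axis (?ix 0) 1) (axis (?ix i) 1) z w = 1 * (z $ ?ix i * w $ ?ix (2*k+1+i) - z $ ?ix (2*k+1+i) * w $ ?ix i)
        + 0 * (z $ ?ix i * w $ ?ix 0 - z $ ?ix 0 * w $ ?ix i)" for z w
      using B1_formula[OF i] by simp
    show ?thesis
      by (rule rows2[OF Bd _ d0[OF i]]) (use comm R1[OF i] in auto)
  qed
  have RU: "Pi (axis r 1) $ ?ix a = (if r = ?ix a then lam else 0)" if "a \<le> k" for a r
  proof (cases "a = 0")
    case True then show ?thesis using R1[of 1 r] k1 by simp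
  next
    case False then show ?thesis using R1[of a r] that by simp
  qed
  have GV: "G $ ?ix (k+1+a) $ q = (if q = ?ix a then 1 else 0)" if "a \<le> k" for a q
  proof -
    have "idx (?ix (k+1+a)) = k+1+a" using idx_ixn[OF bij] that by simp
    moreover have "q = ?ix a \<longleftrightarrow> idx q = a" using eq_ixn_iff[OF bij, of a q] that by simp
    ultimately show ?thesis using that by (auto simp: G_def Gm_def)
  qed
  have GS: "G $ ?ix (2*k+1+i) $ q = (if q = ?ix (2*k+1+i) then eps i else 0)" if "1 \<le> i" "i \<le> k" for i q
  proof -
    have "idx (?ix (2*k+1+i)) = 2*k+1+i" using idx_ixn[OF bij] that by simp
    moreover have "q = ?ix (2*k+1+i) \<longleftrightarrow> idx q = 2*k+1+i" using eq_ixn_iff[OF bij, of "2*k+1+i" q] that by simp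
    ultimately show ?thesis using that by (auto simp: G_def Gm_def)
  qed
  have "Pi = id \<or> Pi = (\<lambda>x. 0)"
    by (rule final_LA[OF bij lin idem GV GS Gsym sa RU R2]) auto
  then show False
  proof
    assume "Pi = id"
    then have "y = 0" if "y \<in> W2" for y using Pi_eq[of 0 y] that W subspace_0 by auto
    then show False using W(2,4) subspace_0 by blast
  next
    assume "Pi = (\<lambda>x. 0)"
    then have "x = 0" if "x \<in> W1" for x using Pi_eq[of x x] that W subspace_0 by auto
    then show False using W(1,3) subspace_0 by blast
  qed
qed

end


lemma bounded_linear_nth2: "bounded_linear (\<lambda>M::real^'n^'m. M $ i $ j)"
  using bounded_linear_compose[OF bounded_linear_vec_nth[of j] bounded_linear_vec_nth[of i]] by (simp add: o_def)

lemma has_derivative_nth2: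
  fixes A :: "'a::real_normed_vector \<Rightarrow> real^'n^'m"
  assumes "(A has_derivative DA) F"
  shows "((\<lambda>y. A y $ i $ j) has_derivative (\<lambda>h. DA h $ i $ j)) F"
  using bounded_linear.has_derivative[OF bounded_linear_nth2 assms] .

lemma has_derivative_nth1:
  fixes A :: "'a::real_normed_vector \<Rightarrow> real^'n"
  assumes "(A has_derivative DA) F"
  shows "((\<lambda>y. A y $ i) has_derivative (\<lambda>h. DA h $ i)) F"
  using bounded_linear.has_derivative[OF bounded_linear_vec_nth[of i] assms] by simp

lemma mat_sum_axis: "(M::real^'n^'m) = (\<Sum>i\<in>UNIV. \<Sum>j\<in>UNIV. (M $ i $ j) *\<^sub>R axis i (axis j 1))"
proof -
  have "(\<Sum>i\<in>UNIV. \<Sum>j\<in>UNIV. (M $ i $ j) *\<^sub>R axis i (axis j (1::real))) $ p $ q = M $ p $ q" for p q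
  proof -
    have "(\<Sum>i\<in>UNIV. \<Sum>j\<in>UNIV. (M $ i $ j) *\<^sub>R axis i (axis j (1::real))) $ p $ q
        = (\<Sum>i\<in>UNIV. \<Sum>j\<in>UNIV. if i = p \<and> j = q then M $ i $ j else 0)"
      by (simp only: sum_component) (intro sum.cong refl; auto simp: axis_def)
    also have "\<dots> = M $ p $ q" by (rule sum2_delta)
    finally show ?thesis .
  qed
  then show ?thesis by (simp add: vec_eq_iff)
qed

lemma has_derivative_vec2:
  fixes A :: "'a::real_normed_vector \<Rightarrow> real^'n^'m"
  assumes "\<And>i j. ((\<lambda>y. A y $ i $ j) has_derivative (\<lambda>h. DA h $ i $ j)) F"
  shows "(A has_derivative DA) F"
proof -
  have e1: "A = (\<lambda>x. \<Sum>i\<in>UNIV. \<Sum>j\<in>UNIV. (A x $ i $ j) *\<^sub>R axis i (axis j 1))" by (rule ext, rule mat_sum_axis)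
  have e2: "DA = (\<lambda>x. \<Sum>i\<in>UNIV. \<Sum>j\<in>UNIV. (DA x $ i $ j) *\<^sub>R axis i (axis j 1))" by (rule ext, rule mat_sum_axis)
  show ?thesis
    apply (subst e1, subst e2)
    apply (intro has_derivative_sum has_derivative_scaleR_left)
    apply (rule assms)
    done
qed

lemma has_derivative_matmul:
  fixes A B :: "'a::real_normed_vector \<Rightarrow> real^'n^'n"
  assumes "(A has_derivative DA) (at x within S)" "(B has_derivative DB) (at x within S)"
  shows "((\<lambda>y. A y ** B y) has_derivative (\<lambda>h. A x ** DB h + DA h ** B x)) (at x within S)"
proof (rule has_derivative_vec2)
  fix i j
  have "((\<lambda>y. \<Sum>k\<in>UNIV. A y $ i $ k * B y $ k $ j) has_derivative
         (\<lambda>h. \<Sum>k\<in>UNIV. A x $ i $ k * DB h $ k $ j + DA h $ i $ k * B x $ k $ j)) (at x within S)"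
    by (intro has_derivative_sum has_derivative_mult has_derivative_nth2 assms)
  then show "((\<lambda>y. (A y ** B y) $ i $ j) has_derivative (\<lambda>h. (A x ** DB h + DA h ** B x) $ i $ j)) (at x within S)"
    by (simp add: matrix_matrix_mult_def sum.distrib)
qed

lemma has_derivative_bilin:
  fixes M :: "'a::real_normed_vector \<Rightarrow> real^'n^'n" and v w :: "'a \<Rightarrow> real^'n"
  assumes "(M has_derivative DM) (at x within S)" "(v has_derivative Dv) (at x within S)" "(w has_derivative Dw) (at x within S)"
  shows "((\<lambda>y. bilin (M y) (v y) (w y)) has_derivative
     (\<lambda>h. bilin (DM h) (v x) (w x) + bilin (M x) (Dv h) (w x) + bilin (M x) (v x) (Dw h))) (at x within S)"
proof -
  have "((\<lambda>y. \<Sum>i\<in>UNIV. \<Sum>j\<in>UNIV. v y $ i * M y $ i $ j * w y $ j) has_derivative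
     (\<lambda>h. \<Sum>i\<in>UNIV. \<Sum>j\<in>UNIV. v x $ i * M x $ i $ j * Dw h $ j + (v x $ i * DM h $ i $ j + Dv h $ i * M x $ i $ j) * w x $ j)) (at x within S)"
    by (intro has_derivative_sum has_derivative_mult has_derivative_nth2 has_derivative_nth1 assms)
  then show ?thesis
    unfolding bilin_def by (simp add: sum.distrib algebra_simps)
qed

lemma has_derivative_unique_open:
  assumes "open S" "x \<in> S" "\<And>y. y \<in> S \<Longrightarrow> f y = g y"
    "(f has_derivative f') (at x)" "(g has_derivative g') (at x)"
  shows "f' = g'"
proof -
  have "(g has_derivative f') (at x)"
    by (rule has_derivative_transform_within_open[OF assms(4) assms(1,2)]) (use assms(3) in auto)
  then show ?thesis using assms(5) has_derivative_unique by blast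
qed

lemma has_derivative_const_dir:
  fixes f :: "real^'n \<Rightarrow> real"
  assumes "open S" "x \<in> S" "(f has_derivative f') (at x)"
    and "\<And>t. x + t *\<^sub>R u \<in> S \<Longrightarrow> f (x + t *\<^sub>R u) = f x"
  shows "f' u = 0"
proof -
  define T where "T = (\<lambda>t::real. x + t *\<^sub>R u) -` S"
  have oT: "open T" unfolding T_def
    by (rule open_vimage[OF assms(1)]) (intro continuous_intros)
  have T0: "0 \<in> T" using assms(2) by (simp add: T_def)
  have d1: "((\<lambda>t. f (x + t *\<^sub>R u)) has_derivative (\<lambda>t. f' (t *\<^sub>R u))) (at 0)"
    apply (rule has_derivative_compose[where f="\<lambda>t. x + t *\<^sub>R u", unfolded o_def])
     apply (auto intro!: derivative_eq_intros)[1]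
    using assms(3) by simp
  have d2: "((\<lambda>t. f x) has_derivative (\<lambda>t. 0)) (at 0)" by simp
  have "(\<lambda>t. f' (t *\<^sub>R u)) = (\<lambda>t. 0)"
    by (rule has_derivative_unique_open[OF oT T0 _ d1 d2]) (use assms(4) T_def in auto)
  then have "f' (1 *\<^sub>R u) = 0" by metis
  then show ?thesis by simp
qed


definition Gv :: "(real^'n \<Rightarrow> 'n \<Rightarrow> real^'n^'n) \<Rightarrow> real^'n \<Rightarrow> real^'n \<Rightarrow> real^'n \<Rightarrow> real^'n::finite" where
  "Gv Gam y v w = (\<Sum>c\<in>UNIV. (v $ c) *\<^sub>R (Gam y c *v w))"

lemma splice_dir1: "r \<notin> I \<Longrightarrow> splice I x (x + t *\<^sub>R axis r 1) = x + t *\<^sub>R axis r (1::real)"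
  by (auto simp: vec_eq_iff splice_def axis_def)

lemma splice_dir2: "r \<in> I \<Longrightarrow> splice I (x + t *\<^sub>R axis r 1) x = x + t *\<^sub>R axis r (1::real)"
  by (auto simp: vec_eq_iff splice_def axis_def)

lemma matrix_works_real: "linear (f::real^'n \<Rightarrow> real^'m) \<Longrightarrow> matrix f *v x = f x"
  using matrix_works[of f x] by (simp add: linear_def scalar_mult_eq_scaleR)

lemma det_ker: "det (A::real^'n^'n) \<noteq> 0 \<Longrightarrow> A *v x = 0 \<Longrightarrow> x = 0"
proof -
  assume "det A \<noteq> 0" "A *v x = 0"
  then obtain B where "B ** A = mat 1" using invertible_det_nz[of A] unfolding invertible_def by blast
  then have "x = B *v (A *v x)" by (simp add: matrix_vector_mul_assoc)
  then show "x = 0" using \<open>A *v x = 0\<close> by simp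
qed

lemma matrix_sub_ldistrib: "(A::real^'n^'n) ** (B - C) = A ** B - A ** C"
  by (simp add: vec_eq_iff matrix_matrix_mult_def sum_subtractf right_diff_distrib)

lemma matrix_sub_rdistrib: "((B::real^'n^'n) - C) ** A = B ** A - C ** A"
  by (simp add: vec_eq_iff matrix_matrix_mult_def sum_subtractf left_diff_distrib)

lemma matrix_add_rdistrib': "((B::real^'n^'n) + C) ** A = B ** A + C ** A"
  by (simp add: vec_eq_iff matrix_matrix_mult_def sum.distrib distrib_right)

lemma matrix_zero_mult: "(0::real^'n^'n) ** A = 0"
  by (simp add: vec_eq_iff matrix_matrix_mult_def)

lemma matrix_mult_zero: "(A::real^'n^'n) ** 0 = 0"
  by (simp add: vec_eq_iff matrix_matrix_mult_def)

lemma bilin_scale_left: "bilin G (c *\<^sub>R v) w = c * bilin G v w"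
  unfolding bilin_def by (simp add: sum_distrib_left mult.assoc)

lemma bilin_scale_right: "bilin G v (c *\<^sub>R w) = c * bilin G v w"
  unfolding bilin_def by (simp add: sum_distrib_left algebra_simps)

lemma bilin_zero_left: "bilin G 0 w = 0"
  unfolding bilin_def by simp

lemma bilin_zero_right: "bilin G v 0 = 0"
  unfolding bilin_def by simp

lemma sum_if_eq_and: "(\<Sum>k\<in>(UNIV::'n::finite set). if k = a \<and> P k then X else 0) = (if P a then X else (0::real))"
proof -
  have "\<And>k. (if k = a \<and> P k then X else 0) = (if k = a then (if P a then X else 0) else 0)" by auto
  then show ?thesis by simp
qed

lemma bilin_sum_left: "finite S \<Longrightarrow> bilin G (\<Sum>d\<in>S. c d *\<^sub>R v d) w = (\<Sum>d\<in>S. c d * bilin G (v d) w)"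
  by (induction S rule: finite_induct) (simp_all add: bilin_zero_left bilin_add_left bilin_scale_left)

lemma Gv_axis: "Gv Gam y (axis c 1) w = Gam y c *v w"
proof -
  have "Gv Gam y (axis c 1) w = (\<Sum>c'\<in>UNIV. if c' = c then Gam y c *v w else 0)"
    unfolding Gv_def by (rule sum.cong) (auto simp: axis_def)
  then show ?thesis by simp
qed

lemma Gv_sum_left: "Gv Gam y (\<Sum>a\<in>S. f a *\<^sub>R v a) w = (\<Sum>a\<in>S. f a *\<^sub>R Gv Gam y (v a) w)"
proof -
  have "Gv Gam y (\<Sum>a\<in>S. f a *\<^sub>R v a) w = (\<Sum>c\<in>UNIV. (\<Sum>a\<in>S. f a * v a $ c) *\<^sub>R (Gam y c *v w))"
    unfolding Gv_def by simp
  also have "\<dots> = (\<Sum>c\<in>UNIV. \<Sum>a\<in>S. f a *\<^sub>R (v a $ c *\<^sub>R (Gam y c *v w)))"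
    by (simp add: scaleR_sum_left)
  also have "\<dots> = (\<Sum>a\<in>S. f a *\<^sub>R Gv Gam y (v a) w)"
    unfolding Gv_def by (subst sum.swap) (simp add: scaleR_sum_right)
  finally show ?thesis .
qed

locale step1 =
  fixes g :: "real^'n::finite \<Rightarrow> real^'n^'n" and Dg :: "real^'n \<Rightarrow> real^'n \<Rightarrow> real^'n^'n"
    and Gam :: "real^'n \<Rightarrow> 'n \<Rightarrow> real^'n^'n"
    and U W :: "(real^'n) set" and \<phi> \<psi> :: "real^'n \<Rightarrow> real^'n" and h :: "real^'n \<Rightarrow> real^'n^'n"
    and I :: "'n set"
    and \<phi>' :: "real^'n \<Rightarrow> real^'n \<Rightarrow> real^'n" and \<phi>'' :: "real^'n \<Rightarrow> real^'n \<Rightarrow> real^'n \<Rightarrow> real^'n"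
    and \<psi>' :: "real^'n \<Rightarrow> real^'n \<Rightarrow> real^'n" and \<psi>'' :: "real^'n \<Rightarrow> real^'n \<Rightarrow> real^'n \<Rightarrow> real^'n"
    and h' :: "real^'n \<Rightarrow> real^'n \<Rightarrow> real^'n^'n"
  assumes oU: "open U" and oW: "open W"
    and Ine: "I \<noteq> {}" "I \<noteq> UNIV"
    and hsym: "\<And>x. x \<in> W \<Longrightarrow> transpose (h x) = h x" and hdet: "\<And>x. x \<in> W \<Longrightarrow> det (h x) \<noteq> 0"
    and hblock: "\<And>x i j. x \<in> W \<Longrightarrow> i \<in> I \<Longrightarrow> j \<notin> I \<Longrightarrow> h x $ i $ j = 0 \<and> h x $ j $ i = 0"
    and hI: "\<And>x y i j. x \<in> W \<Longrightarrow> y \<in> W \<Longrightarrow> i \<in> I \<Longrightarrow> j \<in> I \<Longrightarrow> h x $ i $ j = h (splice I x y) $ i $ j"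
    and hJ: "\<And>x y i j. x \<in> W \<Longrightarrow> y \<in> W \<Longrightarrow> i \<notin> I \<Longrightarrow> j \<notin> I \<Longrightarrow> h x $ i $ j = h (splice I y x) $ i $ j"
    and \<phi>W: "\<And>x. x \<in> W \<Longrightarrow> \<phi> x \<in> U" and \<psi>U: "\<And>y. y \<in> U \<Longrightarrow> \<psi> y \<in> W"
    and \<psi>\<phi>: "\<And>x. x \<in> W \<Longrightarrow> \<psi> (\<phi> x) = x" and \<phi>\<psi>: "\<And>y. y \<in> U \<Longrightarrow> \<phi> (\<psi> y) = y"
    and d\<phi>: "\<And>x. x \<in> W \<Longrightarrow> (\<phi> has_derivative \<phi>' x) (at x)"
    and dd\<phi>: "\<And>x v. x \<in> W \<Longrightarrow> ((\<lambda>x. \<phi>' x v) has_derivative \<phi>'' v x) (at x)"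
    and d\<psi>: "\<And>y. y \<in> U \<Longrightarrow> (\<psi> has_derivative \<psi>' y) (at y)"
    and dd\<psi>: "\<And>y v. y \<in> U \<Longrightarrow> ((\<lambda>y. \<psi>' y v) has_derivative \<psi>'' v y) (at y)"
    and dh: "\<And>x. x \<in> W \<Longrightarrow> (h has_derivative h' x) (at x)"
    and hg: "\<And>x i j. x \<in> W \<Longrightarrow> h x $ i $ j = bilin (g (\<phi> x)) (\<phi>' x (axis i 1)) (\<phi>' x (axis j 1))"
    and dg: "\<And>y. y \<in> U \<Longrightarrow> (g has_derivative Dg y) (at y)"
    and gsym: "\<And>y p q. g y $ p $ q = g y $ q $ p"
    and kos: "\<And>y v w z. y \<in> U \<Longrightarrow> bilin (g y) (Gv Gam y v w) z
                = (bilin (Dg y v) w z + bilin (Dg y w) v z - bilin (Dg y z) v w) / 2"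
begin

abbreviation "E a x \<equiv> \<phi>' x (axis a 1)"

lemma lin\<phi>': "x \<in> W \<Longrightarrow> linear (\<phi>' x)"
  using d\<phi> has_derivative_linear by blast

lemma lin\<phi>'': "x \<in> W \<Longrightarrow> linear (\<phi>'' v x)"
  using dd\<phi> has_derivative_linear by blast

lemma lin\<psi>': "y \<in> U \<Longrightarrow> linear (\<psi>' y)"
  using d\<psi> has_derivative_linear by blast

lemma schwarz_phi:
  assumes x: "x \<in> W"
  shows "\<phi>'' (axis a 1) x (axis b 1) = \<phi>'' (axis b 1) x (axis a 1)"
proof (subst vec_eq_iff, rule allI)
  fix p
  have 1: "\<forall>y\<in>W. ((\<lambda>x. \<phi> x $ p) has_derivative (\<lambda>v. \<phi>' y v $ p)) (at y)"
    using d\<phi> has_derivative_nth1 by blast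
  have 2: "((\<lambda>y. \<phi>' y (axis a 1) $ p) has_derivative (\<lambda>w. \<phi>'' (axis a 1) x w $ p)) (at x)"
    using dd\<phi>[OF x] has_derivative_nth1 by blast
  have 3: "((\<lambda>y. \<phi>' y (axis b 1) $ p) has_derivative (\<lambda>w. \<phi>'' (axis b 1) x w $ p)) (at x)"
    using dd\<phi>[OF x] has_derivative_nth1 by blast
  show "\<phi>'' (axis a 1) x (axis b 1) $ p = \<phi>'' (axis b 1) x (axis a 1) $ p"
    using schwarz[OF oW x 1 2 3] by simp
qed

lemma dh_formula:
  assumes x: "x \<in> W"
  shows "h' x v $ a $ b = bilin (Dg (\<phi> x) (\<phi>' x v)) (E a x) (E b x)
            + bilin (g (\<phi> x)) (\<phi>'' (axis a 1) x v) (E b x) + bilin (g (\<phi> x)) (E a x) (\<phi>'' (axis b 1) x v)"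
proof -
  have d1: "((\<lambda>x. h x $ a $ b) has_derivative (\<lambda>v. h' x v $ a $ b)) (at x)"
    using dh[OF x] by (rule has_derivative_nth2)
  have dgphi: "((\<lambda>x. g (\<phi> x)) has_derivative (\<lambda>v. Dg (\<phi> x) (\<phi>' x v))) (at x)"
    using has_derivative_compose[OF d\<phi>[OF x] dg[OF \<phi>W[OF x]]] by (simp add: o_def)
  have d2: "((\<lambda>x. bilin (g (\<phi> x)) (E a x) (E b x)) has_derivative
     (\<lambda>v. bilin (Dg (\<phi> x) (\<phi>' x v)) (E a x) (E b x) + bilin (g (\<phi> x)) (\<phi>'' (axis a 1) x v) (E b x) + bilin (g (\<phi> x)) (E a x) (\<phi>'' (axis b 1) x v))) (at x)"
    by (rule has_derivative_bilin[OF dgphi dd\<phi>[OF x] dd\<phi>[OF x]])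
  have "(\<lambda>v. h' x v $ a $ b) = (\<lambda>v. bilin (Dg (\<phi> x) (\<phi>' x v)) (E a x) (E b x) + bilin (g (\<phi> x)) (\<phi>'' (axis a 1) x v) (E b x) + bilin (g (\<phi> x)) (E a x) (\<phi>'' (axis b 1) x v))"
    by (rule has_derivative_unique_open[OF oW x _ d1 d2]) (use hg in auto)
  then show ?thesis by metis
qed

lemma dh_mixed:
  assumes x: "x \<in> W" and ab: "a \<in> I \<longleftrightarrow> b \<notin> I"
  shows "h' x v $ a $ b = 0"
proof -
  have d1: "((\<lambda>x. h x $ a $ b) has_derivative (\<lambda>v. h' x v $ a $ b)) (at x)"
    using dh[OF x] by (rule has_derivative_nth2)
  have d2: "((\<lambda>x. 0::real) has_derivative (\<lambda>v. 0)) (at x)" by simp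
  have z: "h y $ a $ b = 0" if "y \<in> W" for y
    using hblock[OF that] ab by (cases "a \<in> I") auto
  have "(\<lambda>v. h' x v $ a $ b) = (\<lambda>v. 0)"
    by (rule has_derivative_unique_open[OF oW x _ d1 d2]) (use z in auto)
  then show ?thesis by metis
qed

lemma dh_I:
  assumes x: "x \<in> W" and "a \<in> I" "b \<in> I" "r \<notin> I"
  shows "h' x (axis r 1) $ a $ b = 0"
proof (rule has_derivative_const_dir[OF oW x, where f="\<lambda>x. h x $ a $ b" and f'="\<lambda>v. h' x v $ a $ b"])
  show "((\<lambda>x. h x $ a $ b) has_derivative (\<lambda>v. h' x v $ a $ b)) (at x)"
    using dh[OF x] by (rule has_derivative_nth2)
  fix t assume "x + t *\<^sub>R axis r 1 \<in> W"
  then show "h (x + t *\<^sub>R axis r 1) $ a $ b = h x $ a $ b"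
    using hI[OF x, of "x + t *\<^sub>R axis r 1" a b] assms splice_dir1[of r I x t] by simp
qed

lemma dh_J:
  assumes x: "x \<in> W" and "a \<notin> I" "b \<notin> I" "r \<in> I"
  shows "h' x (axis r 1) $ a $ b = 0"
proof (rule has_derivative_const_dir[OF oW x, where f="\<lambda>x. h x $ a $ b" and f'="\<lambda>v. h' x v $ a $ b"])
  show "((\<lambda>x. h x $ a $ b) has_derivative (\<lambda>v. h' x v $ a $ b)) (at x)"
    using dh[OF x] by (rule has_derivative_nth2)
  fix t assume "x + t *\<^sub>R axis r 1 \<in> W"
  then show "h (x + t *\<^sub>R axis r 1) $ a $ b = h x $ a $ b"
    using hJ[OF x, of "x + t *\<^sub>R axis r 1" a b] assms splice_dir2[of r I x t] by simp
qed

definition Nab :: "real^'n \<Rightarrow> 'n \<Rightarrow> 'n \<Rightarrow> real^'n" where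
  "Nab x a b = \<phi>'' (axis b 1) x (axis a 1) + Gv Gam (\<phi> x) (E a x) (E b x)"

lemma Nab_orth:
  assumes x: "x \<in> W" and bc: "b \<in> I \<longleftrightarrow> c \<notin> I"
  shows "bilin (g (\<phi> x)) (Nab x a b) (E c x) = 0"
proof -
  let ?G = "g (\<phi> x)"
  let ?X = "\<lambda>a b. \<phi>'' (axis b 1) x (axis a 1)"
  let ?D = "\<lambda>a b c. bilin (Dg (\<phi> x) (E a x)) (E b x) (E c x)"
  have sym: "bilin ?G u w = bilin ?G w u" for u w by (rule bilin_sym) (rule gsym)
  have Dh: "h' x (axis r 1) $ p $ q = ?D r p q + bilin ?G (?X r p) (E q x) + bilin ?G (E p x) (?X r q)" for p q r
    using dh_formula[OF x] by simp
  have S: "?X p q = ?X q p" for p q using schwarz_phi[OF x] by simp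
  have zero: "h' x (axis a 1) $ b $ c + h' x (axis b 1) $ a $ c - h' x (axis c 1) $ a $ b = 0"
  proof (cases "b \<in> I")
    case True
    then have c: "c \<notin> I" using bc by simp
    have 1: "h' x (axis a 1) $ b $ c = 0" using dh_mixed[OF x] True c by simp
    have 2: "h' x (axis b 1) $ a $ c = 0"
      by (cases "a \<in> I") (use dh_mixed[OF x] dh_J[OF x] True c in auto)
    have 3: "h' x (axis c 1) $ a $ b = 0"
      by (cases "a \<in> I") (use dh_mixed[OF x] dh_I[OF x] True c in auto)
    show ?thesis using 1 2 3 by simp
  next
    case False
    then have c: "c \<in> I" using bc by simp
    have 1: "h' x (axis a 1) $ b $ c = 0" using dh_mixed[OF x] False c by simp
    have 2: "h' x (axis b 1) $ a $ c = 0"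
      by (cases "a \<in> I") (use dh_mixed[OF x] dh_I[OF x] False c in auto)
    have 3: "h' x (axis c 1) $ a $ b = 0"
      by (cases "a \<in> I") (use dh_mixed[OF x] dh_J[OF x] False c in auto)
    show ?thesis using 1 2 3 by simp
  qed
  have K: "bilin ?G (Gv Gam (\<phi> x) (E a x) (E b x)) (E c x) = (?D a b c + ?D b a c - ?D c a b) / 2"
    using kos[OF \<phi>W[OF x]] by simp
  have "h' x (axis a 1) $ b $ c + h' x (axis b 1) $ a $ c - h' x (axis c 1) $ a $ b
      = ?D a b c + ?D b a c - ?D c a b + 2 * bilin ?G (?X a b) (E c x)"
    unfolding Dh using S[of a c] S[of b c] S[of a b] sym[of "E b x" "?X c a"] sym[of "E a x" "?X c b"]
    by simp
  then have eqX: "2 * bilin ?G (?X a b) (E c x) = - (?D a b c + ?D b a c - ?D c a b)"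
    using zero by linarith
  show ?thesis unfolding Nab_def bilin_add_left K using eqX by (simp add: field_simps)
qed


lemma comp_id1: assumes y: "y \<in> U" shows "\<phi>' (\<psi> y) (\<psi>' y v) = v"
proof -
  have d1: "((\<lambda>y. \<phi> (\<psi> y)) has_derivative (\<lambda>v. \<phi>' (\<psi> y) (\<psi>' y v))) (at y)"
    using has_derivative_compose[OF d\<psi>[OF y] d\<phi>[OF \<psi>U[OF y]]] by (simp add: o_def)
  have d2: "((\<lambda>y. y) has_derivative (\<lambda>v. v)) (at y)" by simp
  have "(\<lambda>v. \<phi>' (\<psi> y) (\<psi>' y v)) = (\<lambda>v. v)"
    by (rule has_derivative_unique_open[OF oU y _ d1 d2]) (use \<phi>\<psi> in auto)
  then show ?thesis by metis
qed

lemma comp_id2: assumes x: "x \<in> W" shows "\<psi>' (\<phi> x) (\<phi>' x v) = v"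
proof -
  have d1: "((\<lambda>x. \<psi> (\<phi> x)) has_derivative (\<lambda>v. \<psi>' (\<phi> x) (\<phi>' x v))) (at x)"
    using has_derivative_compose[OF d\<phi>[OF x] d\<psi>[OF \<phi>W[OF x]]] by (simp add: o_def)
  have d2: "((\<lambda>x. x) has_derivative (\<lambda>v. v)) (at x)" by simp
  have "(\<lambda>v. \<psi>' (\<phi> x) (\<phi>' x v)) = (\<lambda>v. v)"
    by (rule has_derivative_unique_open[OF oW x _ d1 d2]) (use \<psi>\<phi> in auto)
  then show ?thesis by metis
qed

definition "Mf y = matrix (\<phi>' (\<psi> y))"
definition "Ps y = matrix (\<psi>' y)"
definition P0 :: "real^'n^'n" where "P0 = (\<chi> a b. if a = b \<and> a \<in> I then 1 else 0)"
definition "Pt y = Mf y ** (P0 ** Ps y)"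

lemma Mf_Ps: assumes y: "y \<in> U" shows "Mf y ** Ps y = mat 1"
proof -
  have "Mf y ** Ps y = matrix (\<phi>' (\<psi> y) \<circ> \<psi>' y)"
    unfolding Mf_def Ps_def by (rule matrix_compose[symmetric]) (use lin\<psi>'[OF y] lin\<phi>'[OF \<psi>U[OF y]] in auto)
  also have "\<phi>' (\<psi> y) \<circ> \<psi>' y = id" using comp_id1[OF y] by (auto simp: o_def)
  finally show ?thesis using matrix_id_mat_1 by (simp add: id_def)
qed

lemma Ps_Mf: assumes y: "y \<in> U" shows "Ps y ** Mf y = mat 1"
  using Mf_Ps[OF y] matrix_left_right_inverse by blast

lemma Mf_col: assumes y: "y \<in> U" shows "Mf y $ p $ a = E a (\<psi> y) $ p"
  by (simp add: Mf_def matrix_def)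

lemma Mf_mult: assumes y: "y \<in> U" shows "Mf y *v \<alpha> = (\<Sum>d\<in>UNIV. (\<alpha> $ d) *\<^sub>R E d (\<psi> y))"
proof -
  have "Mf y *v \<alpha> = \<phi>' (\<psi> y) \<alpha>" unfolding Mf_def by (rule matrix_works_real[OF lin\<phi>'[OF \<psi>U[OF y]]])
  also have "\<dots> = (\<Sum>d\<in>UNIV. (\<alpha> $ d) *\<^sub>R E d (\<psi> y))"
    by (rule linear_axis_expand[OF lin\<phi>'[OF \<psi>U[OF y]]])
  finally show ?thesis .
qed

definition "DMf y v = (\<chi> p a. \<phi>'' (axis a 1) (\<psi> y) (\<psi>' y v) $ p)"
definition "DPs y v = (\<chi> a c. \<psi>'' (axis c 1) y v $ a)"

lemma Mf_deriv: assumes y: "y \<in> U" shows "(Mf has_derivative DMf y) (at y)"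
proof (rule has_derivative_vec2)
  fix p a
  have "((\<lambda>y. \<phi>' (\<psi> y) (axis a 1)) has_derivative (\<lambda>v. \<phi>'' (axis a 1) (\<psi> y) (\<psi>' y v))) (at y)"
    using has_derivative_compose[OF d\<psi>[OF y] dd\<phi>[OF \<psi>U[OF y]]] by (simp add: o_def)
  then have "((\<lambda>y. \<phi>' (\<psi> y) (axis a 1) $ p) has_derivative (\<lambda>v. \<phi>'' (axis a 1) (\<psi> y) (\<psi>' y v) $ p)) (at y)"
    by (rule has_derivative_nth1)
  then show "((\<lambda>y. Mf y $ p $ a) has_derivative (\<lambda>h. DMf y h $ p $ a)) (at y)"
    by (simp add: Mf_def matrix_def DMf_def)
qed

lemma Ps_deriv: assumes y: "y \<in> U" shows "(Ps has_derivative DPs y) (at y)"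
proof (rule has_derivative_vec2)
  fix a c
  have "((\<lambda>y. \<psi>' y (axis c 1) $ a) has_derivative (\<lambda>v. \<psi>'' (axis c 1) y v $ a)) (at y)"
    using dd\<psi>[OF y] by (rule has_derivative_nth1)
  then show "((\<lambda>y. Ps y $ a $ c) has_derivative (\<lambda>h. DPs y h $ a $ c)) (at y)"
    by (simp add: Ps_def matrix_def DPs_def)
qed

definition "DPt y v = Mf y ** (P0 ** DPs y v + 0 ** Ps y) + DMf y v ** (P0 ** Ps y)"

lemma Pt_deriv: assumes y: "y \<in> U" shows "(Pt has_derivative DPt y) (at y)"
proof -
  have "((\<lambda>y. P0 ** Ps y) has_derivative (\<lambda>v. P0 ** DPs y v + 0 ** Ps y)) (at y)"
    by (rule has_derivative_matmul[OF has_derivative_const Ps_deriv[OF y]])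
  then show ?thesis unfolding Pt_def[abs_def] DPt_def
    by (rule has_derivative_matmul[OF Mf_deriv[OF y]])
qed

lemma Pt_Mf: assumes y: "y \<in> U" shows "Pt y ** Mf y = Mf y ** P0"
  unfolding Pt_def by (simp add: matrix_mul_assoc[symmetric] Ps_Mf[OF y])

lemma DPt_rel: assumes y: "y \<in> U"
  shows "DPt y v = (DMf y v ** P0 - Pt y ** DMf y v) ** Ps y"
proof -
  have d1: "((\<lambda>y. Pt y ** Mf y) has_derivative (\<lambda>v. Pt y ** DMf y v + DPt y v ** Mf y)) (at y)"
    by (rule has_derivative_matmul[OF Pt_deriv[OF y] Mf_deriv[OF y]])
  have d2: "((\<lambda>y. Mf y ** P0) has_derivative (\<lambda>v. Mf y ** 0 + DMf y v ** P0)) (at y)"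
    by (rule has_derivative_matmul[OF Mf_deriv[OF y] has_derivative_const])
  have "(\<lambda>v. Pt y ** DMf y v + DPt y v ** Mf y) = (\<lambda>v. Mf y ** 0 + DMf y v ** P0)"
    by (rule has_derivative_unique_open[OF oU y _ d1 d2]) (use Pt_Mf in auto)
  then have "Pt y ** DMf y v + DPt y v ** Mf y = DMf y v ** P0"
    by (metis matrix_mult_zero add_0)
  then have "DPt y v ** Mf y = DMf y v ** P0 - Pt y ** DMf y v" by (simp add: algebra_simps)
  then have "DPt y v ** Mf y ** Ps y = (DMf y v ** P0 - Pt y ** DMf y v) ** Ps y" by simp
  then show ?thesis by (simp add: matrix_mul_assoc[symmetric] Mf_Ps[OF y])
qed


definition "Qv y c a = (\<Sum>a'\<in>UNIV. (Ps y $ a' $ c) *\<^sub>R Nab (\<psi> y) a' a)"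
definition "Q y c = (\<chi> p a. Qv y c a $ p)"

lemma DMf_axis: assumes y: "y \<in> U"
  shows "DMf y (axis c 1) = Q y c - Gam y c ** Mf y"
proof -
  let ?x = "\<psi> y"
  have x: "?x \<in> W" using \<psi>U[OF y] .
  have py: "\<phi> ?x = y" using \<phi>\<psi>[OF y] .
  have col: "\<phi>'' (axis a 1) ?x (\<psi>' y (axis c 1)) = Qv y c a - Gam y c *v E a ?x" for a
  proof -
    have e1: "\<psi>' y (axis c 1) = (\<Sum>a'\<in>UNIV. (Ps y $ a' $ c) *\<^sub>R axis a' 1)"
      using vec_sum_axis'[of "\<psi>' y (axis c 1)"] by (simp add: Ps_def matrix_def)
    have "\<phi>'' (axis a 1) ?x (\<psi>' y (axis c 1)) = (\<Sum>a'\<in>UNIV. (Ps y $ a' $ c) *\<^sub>R \<phi>'' (axis a 1) ?x (axis a' 1))"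
      unfolding e1 by (simp add: linear_sum[OF lin\<phi>''[OF x]] linear_cmul[OF lin\<phi>''[OF x]])
    also have "\<dots> = (\<Sum>a'\<in>UNIV. (Ps y $ a' $ c) *\<^sub>R (Nab ?x a' a - Gv Gam y (E a' ?x) (E a ?x)))"
      by (simp add: Nab_def py)
    also have "\<dots> = Qv y c a - (\<Sum>a'\<in>UNIV. (Ps y $ a' $ c) *\<^sub>R Gv Gam y (E a' ?x) (E a ?x))"
      by (simp add: Qv_def scaleR_diff_right sum_subtractf)
    also have "(\<Sum>a'\<in>UNIV. (Ps y $ a' $ c) *\<^sub>R Gv Gam y (E a' ?x) (E a ?x)) = Gv Gam y (\<Sum>a'\<in>UNIV. (Ps y $ a' $ c) *\<^sub>R E a' ?x) (E a ?x)"
      by (rule Gv_sum_left[symmetric])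
    also have "(\<Sum>a'\<in>UNIV. (Ps y $ a' $ c) *\<^sub>R E a' ?x) = \<phi>' ?x (\<psi>' y (axis c 1))"
      unfolding e1 by (simp add: linear_sum[OF lin\<phi>'[OF x]] linear_cmul[OF lin\<phi>'[OF x]])
    also have "\<dots> = axis c 1" by (rule comp_id1[OF y])
    finally show ?thesis by (simp add: Gv_axis)
  qed
  show ?thesis
  proof (subst vec_eq_iff, intro allI, subst vec_eq_iff, intro allI)
    fix p a
    have "(Gam y c ** Mf y) $ p $ a = (Gam y c *v E a ?x) $ p"
      by (simp add: matrix_matrix_mult_def matrix_vector_mult_def Mf_col[OF y])
    then show "DMf y (axis c 1) $ p $ a = (Q y c - Gam y c ** Mf y) $ p $ a"
      using col[of a] by (simp add: DMf_def Q_def)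
  qed
qed

lemma bilin_Mf: assumes y: "y \<in> U"
  shows "bilin (g y) (Mf y *v \<alpha>) w = (\<Sum>d\<in>UNIV. \<alpha> $ d * bilin (g y) (E d (\<psi> y)) w)"
  using Mf_mult[OF y] by (simp add: bilin_sum_left)

lemma hE: assumes y: "y \<in> U" shows "bilin (g y) (E d (\<psi> y)) (E b (\<psi> y)) = h (\<psi> y) $ d $ b"
  using hg[OF \<psi>U[OF y], of d b] \<phi>\<psi>[OF y] by simp

lemma Pt_mult: "Pt y *v n = Mf y *v (P0 *v (Ps y *v n))"
  by (simp add: Pt_def matrix_vector_mul_assoc)

lemma P0_mult: "(P0 *v \<alpha>) $ d = (if d \<in> I then \<alpha> $ d else 0)"
  by (cases "d \<in> I") (simp_all add: matrix_vector_mult_def P0_def if_distrib[of "\<lambda>x. x * _"] cong: if_cong)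

lemma h_ker: assumes x: "x \<in> W" and z: "\<And>b. (\<Sum>d\<in>UNIV. \<beta> $ d * h x $ d $ b) = 0"
  shows "\<beta> = 0"
proof (rule det_ker[OF hdet[OF x]])
  have "(h x *v \<beta>) $ b = 0" for b
  proof -
    have "(h x *v \<beta>) $ b = (\<Sum>d\<in>UNIV. h x $ b $ d * \<beta> $ d)" by (simp add: matrix_vector_mult_def)
    also have "\<dots> = (\<Sum>d\<in>UNIV. \<beta> $ d * h x $ d $ b)"
      using hsym[OF x] by (metis (no_types, lifting) mult.commute transpose_def vec_lambda_beta)
    finally show ?thesis using z by simp
  qed
  then show "h x *v \<beta> = 0" by (simp add: vec_eq_iff)
qed

lemma side_lemma:
  assumes y: "y \<in> U" and orth: "\<And>b. (a \<in> I \<longleftrightarrow> b \<notin> I) \<Longrightarrow> bilin (g y) n (E b (\<psi> y)) = 0"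
  shows "Pt y *v n = (if a \<in> I then n else 0)"
proof -
  let ?x = "\<psi> y"
  have x: "?x \<in> W" using \<psi>U[OF y] .
  define \<alpha> where "\<alpha> = Ps y *v n"
  have n: "n = Mf y *v \<alpha>" unfolding \<alpha>_def by (simp add: matrix_vector_mul_assoc Mf_Ps[OF y])
  have B: "bilin (g y) n (E b ?x) = (\<Sum>d\<in>UNIV. \<alpha> $ d * h ?x $ d $ b)" for b
    by (subst n) (simp add: bilin_Mf[OF y] hE[OF y])
  show ?thesis
  proof (cases "a \<in> I")
    case True
    define \<beta> where "\<beta> = (\<chi> d. if d \<in> I then 0 else \<alpha> $ d)"
    have "(\<Sum>d\<in>UNIV. \<beta> $ d * h ?x $ d $ b) = 0" for b
    proof (cases "b \<in> I")
      case True
      have Z: "\<beta> $ d * h ?x $ d $ b = 0" for d using hblock[OF x, of b d] True by (auto simp: \<beta>_def)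
      show ?thesis by (rule sum.neutral) (use Z in blast)
    next
      case False
      have "(\<Sum>d\<in>UNIV. \<beta> $ d * h ?x $ d $ b) = (\<Sum>d\<in>UNIV. \<alpha> $ d * h ?x $ d $ b)"
        by (rule sum.cong) (use hblock[OF x] False in \<open>auto simp: \<beta>_def\<close>)
      also have "\<dots> = 0" using B[of b] orth[of b] \<open>a \<in> I\<close> False by simp
      finally show ?thesis .
    qed
    then have "\<beta> = 0" by (rule h_ker[OF x])
    then have "\<alpha> $ d = 0" if "d \<notin> I" for d
    proof -
      have "\<beta> $ d = 0" using \<open>\<beta> = 0\<close> by simp
      then show ?thesis using that unfolding \<beta>_def by simp
    qed
    then have P: "P0 *v \<alpha> = \<alpha>" by (auto simp: vec_eq_iff P0_mult)
    have "Pt y *v n = Mf y *v (P0 *v \<alpha>)" by (simp only: Pt_mult \<alpha>_def)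
    then show ?thesis using True P n by simp
  next
    case False
    define \<beta> where "\<beta> = (\<chi> d. if d \<in> I then \<alpha> $ d else 0)"
    have "(\<Sum>d\<in>UNIV. \<beta> $ d * h ?x $ d $ b) = 0" for b
    proof (cases "b \<in> I")
      case False
      have Z: "\<beta> $ d * h ?x $ d $ b = 0" for d using hblock[OF x, of d b] False by (auto simp: \<beta>_def)
      show ?thesis by (rule sum.neutral) (use Z in blast)
    next
      case True
      have "(\<Sum>d\<in>UNIV. \<beta> $ d * h ?x $ d $ b) = (\<Sum>d\<in>UNIV. \<alpha> $ d * h ?x $ d $ b)"
        by (rule sum.cong) (use hblock[OF x] True in \<open>auto simp: \<beta>_def\<close>)
      also have "\<dots> = 0" using B[of b] orth[of b] \<open>a \<notin> I\<close> True by simp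
      finally show ?thesis .
    qed
    then have "\<beta> = 0" by (rule h_ker[OF x])
    then have "\<alpha> $ d = 0" if "d \<in> I" for d
    proof -
      have "\<beta> $ d = 0" using \<open>\<beta> = 0\<close> by simp
      then show ?thesis using that unfolding \<beta>_def by simp
    qed
    then have P: "P0 *v \<alpha> = 0" by (auto simp: vec_eq_iff P0_mult)
    have "Pt y *v n = Mf y *v (P0 *v \<alpha>)" by (simp only: Pt_mult \<alpha>_def)
    then show ?thesis using False P by simp
  qed
qed


lemma Pt_Q: assumes y: "y \<in> U" shows "Pt y ** Q y c = Q y c ** P0"
proof -
  let ?x = "\<psi> y"
  have x: "?x \<in> W" using \<psi>U[OF y] .
  have py: "\<phi> ?x = y" using \<phi>\<psi>[OF y] .
  have col: "Pt y *v Qv y c a = (if a \<in> I then Qv y c a else 0)" for a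
  proof (rule side_lemma[OF y])
    fix b assume ab: "a \<in> I \<longleftrightarrow> b \<notin> I"
    have "bilin (g y) (Qv y c a) (E b ?x) = (\<Sum>a'\<in>UNIV. Ps y $ a' $ c * bilin (g y) (Nab ?x a' a) (E b ?x))"
      unfolding Qv_def by (rule bilin_sum_left) simp
    also have "\<dots> = 0" using Nab_orth[OF x, of a b] ab py by simp
    finally show "bilin (g y) (Qv y c a) (E b ?x) = 0" .
  qed
  show ?thesis
  proof (subst vec_eq_iff, intro allI, subst vec_eq_iff, intro allI)
    fix p a
    have l: "(Pt y ** Q y c) $ p $ a = (Pt y *v Qv y c a) $ p"
      by (simp add: matrix_matrix_mult_def matrix_vector_mult_def Q_def)
    have r: "(Q y c ** P0) $ p $ a = (if a \<in> I then Qv y c a $ p else 0)"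
      by (simp add: matrix_matrix_mult_def P0_def Q_def if_distrib[of "\<lambda>x. _ * x"] sum_if_eq_and cong: if_cong)
    show "(Pt y ** Q y c) $ p $ a = (Q y c ** P0) $ p $ a"
      unfolding l r col by simp
  qed
qed

lemma DPt_axis: assumes y: "y \<in> U"
  shows "DPt y (axis c 1) = Pt y ** Gam y c - Gam y c ** Pt y"
proof -
  let ?Q = "Q y c" and ?G = "Gam y c" and ?M = "Mf y" and ?S = "Ps y" and ?P = "Pt y"
  have "DPt y (axis c 1) = ((?Q - ?G ** ?M) ** P0 - ?P ** (?Q - ?G ** ?M)) ** ?S"
    using DPt_rel[OF y] DMf_axis[OF y] by simp
  also have "\<dots> = ((?Q ** P0 - ?P ** ?Q) - ?G ** ?M ** P0 + ?P ** ?G ** ?M) ** ?S"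
    by (simp add: matrix_sub_rdistrib matrix_sub_ldistrib matrix_mul_assoc algebra_simps)
  also have "\<dots> = (?P ** ?G ** ?M - ?G ** ?M ** P0) ** ?S"
    using Pt_Q[OF y] by (simp add: algebra_simps)
  also have "\<dots> = ?P ** ?G ** (?M ** ?S) - ?G ** (?M ** (P0 ** ?S))"
    by (simp add: matrix_sub_rdistrib matrix_mul_assoc)
  also have "\<dots> = ?P ** ?G - ?G ** ?P"
    by (simp add: Mf_Ps[OF y] Pt_def)
  finally show ?thesis .
qed

lemma P0_idem: "P0 ** P0 = P0"
proof -
  have "(P0 ** P0) $ a $ b = P0 $ a $ b" for a b
    by (cases "a \<in> I"; cases "a = b") (simp_all add: matrix_matrix_mult_def P0_def if_distrib[of "\<lambda>x. x * _"] cong: if_cong)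
  then show ?thesis by (simp add: vec_eq_iff)
qed

lemma Pt_idem: assumes y: "y \<in> U" shows "Pt y ** Pt y = Pt y"
proof -
  have "Pt y ** Pt y = Mf y ** (P0 ** (Ps y ** Mf y) ** P0) ** Ps y"
    by (simp add: Pt_def matrix_mul_assoc)
  also have "\<dots> = Pt y" by (simp add: Ps_Mf[OF y] P0_idem Pt_def matrix_mul_assoc)
  finally show ?thesis .
qed

lemma P0_from_Pt: assumes y: "y \<in> U" shows "Ps y ** Pt y ** Mf y = P0"
proof -
  have "Ps y ** Pt y ** Mf y = (Ps y ** Mf y) ** P0 ** (Ps y ** Mf y)"
    by (simp add: Pt_def matrix_mul_assoc)
  then show ?thesis by (simp add: Ps_Mf[OF y])
qed

lemma Pt_ne0: assumes y: "y \<in> U" shows "Pt y \<noteq> 0"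
proof
  assume "Pt y = 0"
  then have "P0 = 0" using P0_from_Pt[OF y] by (simp add: matrix_mult_zero matrix_zero_mult)
  moreover obtain i where "i \<in> I" using Ine by blast
  moreover have "P0 $ i $ i = 1" using \<open>i \<in> I\<close> by (simp add: P0_def)
  ultimately show False by simp
qed

lemma Pt_ne1: assumes y: "y \<in> U" shows "Pt y \<noteq> mat 1"
proof
  assume "Pt y = mat 1"
  then have "P0 = mat 1" using P0_from_Pt[OF y] Ps_Mf[OF y] by simp
  moreover obtain j where "j \<notin> I" using Ine by blast
  moreover have "P0 $ j $ j = 0" using \<open>j \<notin> I\<close> by (simp add: P0_def)
  moreover have "(mat 1 :: real^'n^'n) $ j $ j = 1" by (simp add: mat_def)
  ultimately show False by simp
qed

lemma bilin_sum_right: "finite S \<Longrightarrow> bilin G v (\<Sum>d\<in>S. c d *\<^sub>R w d) = (\<Sum>d\<in>S. c d * bilin G v (w d))"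
  by (induction S rule: finite_induct) (simp_all add: bilin_zero_right bilin_add_right bilin_scale_right)

lemma bilin_MfMf: assumes y: "y \<in> U"
  shows "bilin (g y) (Mf y *v \<alpha>) (Mf y *v \<beta>) = (\<Sum>d\<in>UNIV. \<Sum>e\<in>UNIV. \<alpha> $ d * \<beta> $ e * h (\<psi> y) $ d $ e)"
proof -
  have "bilin (g y) (Mf y *v \<alpha>) (Mf y *v \<beta>) = (\<Sum>d\<in>UNIV. \<alpha> $ d * bilin (g y) (E d (\<psi> y)) (Mf y *v \<beta>))"
    by (rule bilin_Mf[OF y])
  also have "\<dots> = (\<Sum>d\<in>UNIV. \<alpha> $ d * (\<Sum>e\<in>UNIV. \<beta> $ e * h (\<psi> y) $ d $ e))"
    by (simp add: Mf_mult[OF y] bilin_sum_right hE[OF y])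
  finally show ?thesis by (simp add: sum_distrib_left mult.assoc)
qed

lemma Pt_sa: assumes y: "y \<in> U"
  shows "bilin (g y) (Pt y *v u) w = bilin (g y) u (Pt y *v w)"
proof -
  let ?x = "\<psi> y"
  have x: "?x \<in> W" using \<psi>U[OF y] .
  define \<alpha> where "\<alpha> = Ps y *v u"
  define \<beta> where "\<beta> = Ps y *v w"
  have u: "u = Mf y *v \<alpha>" unfolding \<alpha>_def by (simp add: matrix_vector_mul_assoc Mf_Ps[OF y])
  have w: "w = Mf y *v \<beta>" unfolding \<beta>_def by (simp add: matrix_vector_mul_assoc Mf_Ps[OF y])
  have pu: "Pt y *v u = Mf y *v (P0 *v \<alpha>)" by (simp only: Pt_mult \<alpha>_def)
  have pw: "Pt y *v w = Mf y *v (P0 *v \<beta>)" by (simp only: Pt_mult \<beta>_def)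
  have "bilin (g y) (Pt y *v u) w = (\<Sum>d\<in>UNIV. \<Sum>e\<in>UNIV. (P0 *v \<alpha>) $ d * \<beta> $ e * h ?x $ d $ e)"
    unfolding pu by (subst w) (rule bilin_MfMf[OF y])
  also have "\<dots> = (\<Sum>d\<in>UNIV. \<Sum>e\<in>UNIV. \<alpha> $ d * (P0 *v \<beta>) $ e * h ?x $ d $ e)"
  proof (intro sum.cong refl)
    fix d e
    show "(P0 *v \<alpha>) $ d * \<beta> $ e * h ?x $ d $ e = \<alpha> $ d * (P0 *v \<beta>) $ e * h ?x $ d $ e"
      using hblock[OF x, of d e] hblock[OF x, of e d] by (cases "d \<in> I"; cases "e \<in> I") (simp_all add: P0_mult)
  qed
  also have "\<dots> = bilin (g y) u (Pt y *v w)"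
    unfolding pw by (subst u) (rule bilin_MfMf[OF y, symmetric])
  finally show ?thesis .
qed

end

lemma comm_identity:
  fixes P Xcd Xdc Gc Gd :: "real^'n^'n"
  assumes "P ** Xdc + (P ** Gd - Gd ** P) ** Gc - (Gc ** (P ** Gd - Gd ** P) + Xdc ** P)
         = P ** Xcd + (P ** Gc - Gc ** P) ** Gd - (Gd ** (P ** Gc - Gc ** P) + Xcd ** P)"
  shows "P ** (Xcd - Xdc + Gc ** Gd - Gd ** Gc) = (Xcd - Xdc + Gc ** Gd - Gd ** Gc) ** P"
  using assms
  by (simp add: matrix_sub_rdistrib matrix_sub_ldistrib matrix_add_ldistrib matrix_add_rdistrib' matrix_mul_assoc algebra_simps)


lemma (in step1) commute_K:
  assumes y0: "y0 \<in> U" and dG: "\<And>c. ((\<lambda>y. Gam y c) has_derivative DGam c) (at y0)"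
  shows "Pt y0 ** (DGam d (axis c 1) - DGam c (axis d 1) + Gam y0 c ** Gam y0 d - Gam y0 d ** Gam y0 c)
       = (DGam d (axis c 1) - DGam c (axis d 1) + Gam y0 c ** Gam y0 d - Gam y0 d ** Gam y0 c) ** Pt y0"
proof (rule comm_identity)
  define L where "L c v = (Pt y0 ** DGam c v + DPt y0 v ** Gam y0 c) - (Gam y0 c ** DPt y0 v + DGam c v ** Pt y0)" for c v
  have dL: "((\<lambda>y. DPt y (axis c 1)) has_derivative L c) (at y0)" for c
  proof -
    have "((\<lambda>y. Pt y ** Gam y c - Gam y c ** Pt y) has_derivative L c) (at y0)"
      unfolding L_def[abs_def]
      by (intro has_derivative_diff has_derivative_matmul Pt_deriv[OF y0] dG)
    then show ?thesis
      by (rule has_derivative_transform_within_open[OF _ oU y0]) (simp add: DPt_axis)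
  qed
  have "L c (axis d 1) $ p $ q = L d (axis c 1) $ p $ q" for p q
  proof -
    have 1: "\<forall>y\<in>U. ((\<lambda>y. Pt y $ p $ q) has_derivative (\<lambda>v. DPt y v $ p $ q)) (at y)"
      using Pt_deriv has_derivative_nth2 by blast
    have 2: "((\<lambda>y. DPt y (axis c 1) $ p $ q) has_derivative (\<lambda>v. L c v $ p $ q)) (at y0)"
      using dL has_derivative_nth2 by blast
    have 3: "((\<lambda>y. DPt y (axis d 1) $ p $ q) has_derivative (\<lambda>v. L d v $ p $ q)) (at y0)"
      using dL has_derivative_nth2 by blast
    show ?thesis using schwarz[OF oU y0 1 2 3] by simp
  qed
  then have "L c (axis d 1) = L d (axis c 1)" by (simp add: vec_eq_iff)
  then show "Pt y0 ** DGam c (axis d 1) + (Pt y0 ** Gam y0 d - Gam y0 d ** Pt y0) ** Gam y0 c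
      - (Gam y0 c ** (Pt y0 ** Gam y0 d - Gam y0 d ** Pt y0) + DGam c (axis d 1) ** Pt y0) =
    Pt y0 ** DGam d (axis c 1) + (Pt y0 ** Gam y0 c - Gam y0 c ** Pt y0) ** Gam y0 d
      - (Gam y0 d ** (Pt y0 ** Gam y0 c - Gam y0 c ** Pt y0) + DGam d (axis c 1) ** Pt y0)"
    unfolding L_def DPt_axis[OF y0] .
qed


lemma smooth_real_fun:
  assumes "smooth_on UNIV (f::real \<Rightarrow> real)"
  shows "DERIV f u :> deriv f u" "DERIV (deriv f) u :> deriv (deriv f) u"
proof -
  have "Ck (Suc (Suc 0)) UNIV f" using assms by (simp add: smooth_on_def)
  then obtain f' where d1: "\<forall>x. (f has_derivative f' x) (at x)" and c1: "\<forall>v. Ck (Suc 0) UNIV (\<lambda>x. f' x v)"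
    by auto
  have lin: "f' x h = h * f' x 1" for x h
    using linear_cmul[OF has_derivative_linear[OF d1[rule_format, of x]], of h 1] by simp
  have D1: "DERIV f x :> f' x 1" for x
    unfolding has_field_derivative_def using d1[rule_format, of x] lin
    by (metis (no_types) ext mult.commute)
  then have df: "deriv f = (\<lambda>x. f' x 1)" by (simp add: DERIV_imp_deriv ext)
  then show "DERIV f u :> deriv f u" using D1 by simp
  obtain f'' where d2: "\<forall>x. ((\<lambda>x. f' x 1) has_derivative f'' x) (at x)"
    using c1[rule_format, of 1] by auto
  have lin2: "f'' x h = h * f'' x 1" for x h
    using linear_cmul[OF has_derivative_linear[OF d2[rule_format, of x]], of h 1] by simp
  have D2: "DERIV (deriv f) x :> f'' x 1" for x
    unfolding has_field_derivative_def df using d2[rule_format, of x] lin2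
    by (metis (no_types) ext mult.commute)
  then show "DERIV (deriv f) u :> deriv (deriv f) u" using DERIV_imp_deriv by metis
qed

definition gN :: "nat \<Rightarrow> (nat \<Rightarrow> real) \<Rightarrow> (nat \<Rightarrow> real \<Rightarrow> real) \<Rightarrow> (nat \<Rightarrow> real) \<Rightarrow> nat \<Rightarrow> nat \<Rightarrow> real" where
  "gN k eps F Y a b = (if (a \<le> k \<and> b = a + k + 1) \<or> (b \<le> k \<and> a = b + k + 1) then 1
     else if a = b \<and> 2*k+2 \<le> a \<and> a \<le> 3*k+1 then eps (a - (2*k+1))
     else if a = 0 \<and> 1 \<le> b \<and> b \<le> k then 2 * F b (Y b) * Y (2*k+1+b)
     else if b = 0 \<and> 1 \<le> a \<and> a \<le> k then 2 * F a (Y a) * Y (2*k+1+a)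
     else if a = b \<and> 1 \<le> a \<and> a \<le> k then - 2 * Y 0 * Y (2*k+1+a)
     else 0)"

lemma gF_gN: "gF k idx eps F y $ p $ q = gN k eps F (coord idx y) (idx p) (idx q)"
  by (simp add: gF_def gN_def Let_def)

definition dgN :: "nat \<Rightarrow> (nat \<Rightarrow> real \<Rightarrow> real) \<Rightarrow> (nat \<Rightarrow> real) \<Rightarrow> nat \<Rightarrow> nat \<Rightarrow> nat \<Rightarrow> real" where
  "dgN k F Y r a b =
    (if a = 0 \<and> 1 \<le> b \<and> b \<le> k then
       (if r = b then 2 * deriv (F b) (Y b) * Y (2*k+1+b) else if r = 2*k+1+b then 2 * F b (Y b) else 0)
     else if b = 0 \<and> 1 \<le> a \<and> a \<le> k then
       (if r = a then 2 * deriv (F a) (Y a) * Y (2*k+1+a) else if r = 2*k+1+a then 2 * F a (Y a) else 0)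
     else if a = b \<and> 1 \<le> a \<and> a \<le> k then
       (if r = 0 then - 2 * Y (2*k+1+a) else if r = 2*k+1+a then - 2 * Y 0 else 0)
     else 0)"

definition ddgN :: "nat \<Rightarrow> (nat \<Rightarrow> real \<Rightarrow> real) \<Rightarrow> (nat \<Rightarrow> real) \<Rightarrow> nat \<Rightarrow> nat \<Rightarrow> nat \<Rightarrow> nat \<Rightarrow> real" where
  "ddgN k F Y t r a b =
    (if a = 0 \<and> 1 \<le> b \<and> b \<le> k then
       (if r = b then (if t = b then 2 * deriv (deriv (F b)) (Y b) * Y (2*k+1+b) else if t = 2*k+1+b then 2 * deriv (F b) (Y b) else 0)
        else if r = 2*k+1+b then (if t = b then 2 * deriv (F b) (Y b) else 0) else 0)
     else if b = 0 \<and> 1 \<le> a \<and> a \<le> k then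
       (if r = a then (if t = a then 2 * deriv (deriv (F a)) (Y a) * Y (2*k+1+a) else if t = 2*k+1+a then 2 * deriv (F a) (Y a) else 0)
        else if r = 2*k+1+a then (if t = a then 2 * deriv (F a) (Y a) else 0) else 0)
     else if a = b \<and> 1 \<le> a \<and> a \<le> k then
       (if r = 0 then (if t = 2*k+1+a then - 2 else 0) else if r = 2*k+1+a then (if t = 0 then - 2 else 0) else 0)
     else 0)"

definition GL :: "nat \<Rightarrow> (nat \<Rightarrow> real \<Rightarrow> real) \<Rightarrow> (nat \<Rightarrow> real) \<Rightarrow> nat \<Rightarrow> nat \<Rightarrow> nat \<Rightarrow> real" where
  "GL k F Y a b c = (dgN k F Y a b c + dgN k F Y b a c - dgN k F Y c a b) / 2"

definition GamN :: "nat \<Rightarrow> (nat \<Rightarrow> real) \<Rightarrow> (nat \<Rightarrow> real \<Rightarrow> real) \<Rightarrow> (nat \<Rightarrow> real) \<Rightarrow> nat \<Rightarrow> nat \<Rightarrow> nat \<Rightarrow> real" where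
  "GamN k eps F Y p a b = (if k+1 \<le> p \<and> p \<le> 2*k+1 then GL k F Y a b (p - (k+1))
      else if 2*k+2 \<le> p \<and> p \<le> 3*k+1 then eps (p - (2*k+1)) * GL k F Y a b p else 0)"

definition dGL :: "nat \<Rightarrow> (nat \<Rightarrow> real \<Rightarrow> real) \<Rightarrow> (nat \<Rightarrow> real) \<Rightarrow> nat \<Rightarrow> nat \<Rightarrow> nat \<Rightarrow> nat \<Rightarrow> real" where
  "dGL k F Y t a b c = (ddgN k F Y t a b c + ddgN k F Y t b a c - ddgN k F Y t c a b) / 2"

definition dGamN :: "nat \<Rightarrow> (nat \<Rightarrow> real) \<Rightarrow> (nat \<Rightarrow> real \<Rightarrow> real) \<Rightarrow> (nat \<Rightarrow> real) \<Rightarrow> nat \<Rightarrow> nat \<Rightarrow> nat \<Rightarrow> nat \<Rightarrow> real" where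
  "dGamN k eps F Y t p a b = (if k+1 \<le> p \<and> p \<le> 2*k+1 then dGL k F Y t a b (p - (k+1))
      else if 2*k+2 \<le> p \<and> p \<le> 3*k+1 then eps (p - (2*k+1)) * dGL k F Y t a b p else 0)"

definition tri :: "('n \<Rightarrow> 'n \<Rightarrow> 'n \<Rightarrow> real) \<Rightarrow> real^'n \<Rightarrow> real^'n \<Rightarrow> real^'n \<Rightarrow> real" where
  "tri T v w z = (\<Sum>c\<in>UNIV. \<Sum>b\<in>UNIV. \<Sum>q\<in>UNIV. v $ c * w $ b * z $ q * T c b q)"

lemma swap_in: "(\<Sum>a\<in>A. \<Sum>b\<in>B. \<Sum>c\<in>C. f a b c) = (\<Sum>a\<in>A. \<Sum>c\<in>C. \<Sum>b\<in>B. f a b c)"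
  by (rule sum.cong[OF refl], rule sum.swap)

lemma rot3: "(\<Sum>a\<in>A. \<Sum>b\<in>B. \<Sum>c\<in>C. f a b c) = (\<Sum>c\<in>C. \<Sum>a\<in>A. \<Sum>b\<in>B. f a b c)"
  by (subst swap_in, rule sum.swap)

lemma tri_add: "tri (\<lambda>c b q. T1 c b q + T2 c b q) v w z = tri T1 v w z + tri T2 v w z"
  unfolding tri_def by (simp add: sum.distrib distrib_left)
lemma tri_diff: "tri (\<lambda>c b q. T1 c b q - T2 c b q) v w z = tri T1 v w z - tri T2 v w z"
  unfolding tri_def by (simp add: sum_subtractf right_diff_distrib)
lemma tri_div: "tri (\<lambda>c b q. T1 c b q / 2) v w z = tri T1 v w z / 2"
  unfolding tri_def by (simp add: sum_divide_distrib)

lemma tri_comb: "(tri T1 v w z + tri T2 v w z - tri T3 v w z) / 2 = tri (\<lambda>c b q. (T1 c b q + T2 c b q - T3 c b q) / 2) v w z"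
  by (simp only: tri_div tri_diff[of "\<lambda>c b q. T1 c b q + T2 c b q"] tri_add)

lemma dgN_V:
  assumes "k+1 \<le> q" "q \<le> 2*k+1"
  shows "dgN k F Y r a q = 0" "dgN k F Y q a b = 0"
  using assms by (auto simp: dgN_def)

lemma GL_V:
  assumes "k+1 \<le> q" "q \<le> 2*k+1"
  shows "GL k F Y a b q = 0"
  using dgN_V[OF assms] by (simp add: GL_def)

locale mctx =
  fixes k :: nat and idx :: "'n::finite \<Rightarrow> nat" and F :: "nat \<Rightarrow> real \<Rightarrow> real" and eps :: "nat \<Rightarrow> real"
  assumes bij: "bij_betw idx UNIV {..<3*k+2}"
    and Fsm: "\<forall>i\<in>{1..k}. smooth_on UNIV (F i)"
begin

lemma F_d1: "1 \<le> i \<Longrightarrow> i \<le> k \<Longrightarrow> DERIV (F i) u :> deriv (F i) u"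
  using smooth_real_fun(1) Fsm by auto
lemma F_d2: "1 \<le> i \<Longrightarrow> i \<le> k \<Longrightarrow> DERIV (deriv (F i)) u :> deriv (deriv (F i)) u"
  using smooth_real_fun(2) Fsm by auto

lemma sum_one:
  assumes "m < 3*k+2"
  shows "(\<Sum>r\<in>UNIV. (v::real^'n) $ r * (if idx r = m then X else 0)) = v $ ixn idx m * X"
proof -
  have "(\<Sum>r\<in>UNIV. v $ r * (if idx r = m then X else 0)) = (\<Sum>r\<in>UNIV. if r = ixn idx m then v $ r * X else 0)"
    by (rule sum.cong) (auto simp: eq_ixn_iff[OF bij assms])
  then show ?thesis by simp
qed

lemma sum_two:
  assumes "m1 < 3*k+2" "m2 < 3*k+2" "m1 \<noteq> m2"
  shows "(\<Sum>r\<in>UNIV. (v::real^'n) $ r * (if idx r = m1 then X else if idx r = m2 then Z else 0)) = v $ ixn idx m1 * X + v $ ixn idx m2 * Z"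
proof -
  have "(\<Sum>r\<in>UNIV. v $ r * (if idx r = m1 then X else if idx r = m2 then Z else 0))
      = (\<Sum>r\<in>UNIV. v $ r * (if idx r = m1 then X else 0) + v $ r * (if idx r = m2 then Z else 0))"
    by (rule sum.cong) (use assms in auto)
  then show ?thesis using sum_one[OF assms(1), of v X] sum_one[OF assms(2), of v Z] by (simp add: sum.distrib)
qed

abbreviation "Yc y \<equiv> coord idx y"

lemma has_derivative_coord: "((\<lambda>y. Yc y m) has_derivative (\<lambda>v. v $ ixn idx m)) (at y)"
  unfolding coord_ixn by (rule bounded_linear.has_derivative[OF bounded_linear_vec_nth, of _ "\<lambda>v. v"]) simp

lemma has_derivative_Fcoord:
  assumes "DERIV f (Yc y m) :> D"
  shows "((\<lambda>y. f (Yc y m)) has_derivative (\<lambda>v. v $ ixn idx m * D)) (at y)"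
  by (rule DERIV_compose_FDERIV[OF assms has_derivative_coord])

lemma gN_deriv:
  "((\<lambda>y. gN k eps F (Yc y) a b) has_derivative (\<lambda>v. \<Sum>r\<in>UNIV. v $ r * dgN k F (Yc y) (idx r) a b)) (at y)"
proof -
  consider (A) "a = 0 \<and> 1 \<le> b \<and> b \<le> k" | (B) "b = 0 \<and> 1 \<le> a \<and> a \<le> k" | (C) "a = b \<and> 1 \<le> a \<and> a \<le> k"
    | (D) "\<not> (a = 0 \<and> 1 \<le> b \<and> b \<le> k)" "\<not> (b = 0 \<and> 1 \<le> a \<and> a \<le> k)" "\<not> (a = b \<and> 1 \<le> a \<and> a \<le> k)"
    by blast
  then show ?thesis
  proof cases
    case A
    have g: "gN k eps F Y a b = 2 * F b (Y b) * Y (2*k+1+b)" for Y using A by (auto simp: gN_def)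
    have d: "dgN k F Y r a b = (if r = b then 2 * deriv (F b) (Y b) * Y (2*k+1+b) else if r = 2*k+1+b then 2 * F b (Y b) else 0)" for Y r
      using A by (simp add: dgN_def)
    have "((\<lambda>y. 2 * F b (Yc y b) * Yc y (2*k+1+b)) has_derivative
        (\<lambda>v. v $ ixn idx b * (2 * deriv (F b) (Yc y b) * Yc y (2*k+1+b)) + v $ ixn idx (2*k+1+b) * (2 * F b (Yc y b)))) (at y)"
    proof (rule has_derivative_eq_rhs)
      have h1: "((\<lambda>y. F b (Yc y b)) has_derivative (\<lambda>v. v $ ixn idx b * deriv (F b) (Yc y b))) (at y)"
        by (rule has_derivative_Fcoord[OF F_d1]) (use A in auto)
      show "((\<lambda>y. 2 * F b (Yc y b) * Yc y (2*k+1+b)) has_derivative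
          (\<lambda>v. 2 * F b (Yc y b) * v $ ixn idx (2*k+1+b) + 2 * (v $ ixn idx b * deriv (F b) (Yc y b)) * Yc y (2*k+1+b))) (at y)"
        using has_derivative_mult[OF has_derivative_mult[OF has_derivative_const h1] has_derivative_coord] by simp
    qed (auto simp: algebra_simps)
    then show ?thesis unfolding g d using A by (simp add: sum_two)
  next
    case B
    have g: "gN k eps F Y a b = 2 * F a (Y a) * Y (2*k+1+a)" for Y using B by (auto simp: gN_def)
    have d: "dgN k F Y r a b = (if r = a then 2 * deriv (F a) (Y a) * Y (2*k+1+a) else if r = 2*k+1+a then 2 * F a (Y a) else 0)" for Y r
      using B by (simp add: dgN_def)
    have "((\<lambda>y. 2 * F a (Yc y a) * Yc y (2*k+1+a)) has_derivative
        (\<lambda>v. v $ ixn idx a * (2 * deriv (F a) (Yc y a) * Yc y (2*k+1+a)) + v $ ixn idx (2*k+1+a) * (2 * F a (Yc y a)))) (at y)"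
    proof (rule has_derivative_eq_rhs)
      have h1: "((\<lambda>y. F a (Yc y a)) has_derivative (\<lambda>v. v $ ixn idx a * deriv (F a) (Yc y a))) (at y)"
        by (rule has_derivative_Fcoord[OF F_d1]) (use B in auto)
      show "((\<lambda>y. 2 * F a (Yc y a) * Yc y (2*k+1+a)) has_derivative
          (\<lambda>v. 2 * F a (Yc y a) * v $ ixn idx (2*k+1+a) + 2 * (v $ ixn idx a * deriv (F a) (Yc y a)) * Yc y (2*k+1+a))) (at y)"
        using has_derivative_mult[OF has_derivative_mult[OF has_derivative_const h1] has_derivative_coord] by simp
    qed (auto simp: algebra_simps)
    then show ?thesis unfolding g d using B by (simp add: sum_two)
  next
    case C
    have g: "gN k eps F Y a b = - 2 * Y 0 * Y (2*k+1+a)" for Y using C by (auto simp: gN_def)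
    have d: "dgN k F Y r a b = (if r = 0 then - 2 * Y (2*k+1+a) else if r = 2*k+1+a then - 2 * Y 0 else 0)" for Y r
      using C by (simp add: dgN_def)
    have "((\<lambda>y. - 2 * Yc y 0 * Yc y (2*k+1+a)) has_derivative
        (\<lambda>v. v $ ixn idx 0 * (- 2 * Yc y (2*k+1+a)) + v $ ixn idx (2*k+1+a) * (- 2 * Yc y 0))) (at y)"
    proof (rule has_derivative_eq_rhs)
      show "((\<lambda>y. (- 2) * Yc y 0 * Yc y (2*k+1+a)) has_derivative
          (\<lambda>v. ((- 2) * Yc y 0) * v $ ixn idx (2*k+1+a) + ((- 2) * v $ ixn idx 0 + 0 * Yc y 0) * Yc y (2*k+1+a))) (at y)"
        by (rule has_derivative_mult[OF has_derivative_mult[OF has_derivative_const has_derivative_coord] has_derivative_coord])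
    qed (auto simp: algebra_simps)
    then show ?thesis unfolding g d using C by (simp add: sum_two)
  next
    case D
    have c1: "(a = 0 \<and> 1 \<le> b \<and> b \<le> k) = False" "(b = 0 \<and> 1 \<le> a \<and> a \<le> k) = False"
      "(a = b \<and> 1 \<le> a \<and> a \<le> k) = False" using D by blast+
    have g: "gN k eps F Y a b = gN k eps F (\<lambda>_. 0) a b" for Y unfolding gN_def c1 if_False ..
    have d: "dgN k F Y r a b = 0" for Y r unfolding dgN_def c1 if_False ..
    show ?thesis unfolding d by (subst g) simp
  qed
qed


lemma hd_cFY:
  assumes "DERIV f (Yc y m) :> D" "m < 3*k+2" "m' < 3*k+2" "m \<noteq> m'"
  shows "((\<lambda>y. c * f (Yc y m) * Yc y m') has_derivative
     (\<lambda>v. \<Sum>t\<in>UNIV. v $ t * (if idx t = m then c * D * Yc y m' else if idx t = m' then c * f (Yc y m) else 0))) (at y)"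
proof (rule has_derivative_eq_rhs)
  show "((\<lambda>y. c * f (Yc y m) * Yc y m') has_derivative
      (\<lambda>v. c * f (Yc y m) * v $ ixn idx m' + (c * (v $ ixn idx m * D) + 0 * f (Yc y m)) * Yc y m')) (at y)"
    by (rule has_derivative_mult[OF has_derivative_mult[OF has_derivative_const has_derivative_Fcoord[OF assms(1)]] has_derivative_coord])
qed (use assms in \<open>auto simp: sum_two algebra_simps\<close>)

lemma hd_cF:
  assumes "DERIV f (Yc y m) :> D" "m < 3*k+2"
  shows "((\<lambda>y. c * f (Yc y m)) has_derivative
     (\<lambda>v. \<Sum>t\<in>UNIV. v $ t * (if idx t = m then c * D else 0))) (at y)"
proof (rule has_derivative_eq_rhs)
  show "((\<lambda>y. c * f (Yc y m)) has_derivative (\<lambda>v. c * (v $ ixn idx m * D) + 0 * f (Yc y m))) (at y)"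
    by (rule has_derivative_mult[OF has_derivative_const has_derivative_Fcoord[OF assms(1)]])
qed (use assms in \<open>auto simp: sum_one algebra_simps\<close>)

lemma hd_cY:
  assumes "m < 3*k+2"
  shows "((\<lambda>y. c * Yc y m) has_derivative
     (\<lambda>v. \<Sum>t\<in>UNIV. v $ t * (if idx t = m then c else 0))) (at y)"
proof (rule has_derivative_eq_rhs)
  show "((\<lambda>y. c * Yc y m) has_derivative (\<lambda>v. c * v $ ixn idx m + 0 * Yc y m)) (at y)"
    by (rule has_derivative_mult[OF has_derivative_const has_derivative_coord])
qed (use assms in \<open>auto simp: sum_one algebra_simps\<close>)

lemma dgN_deriv:
  "((\<lambda>y. dgN k F (Yc y) r a b) has_derivative (\<lambda>v. \<Sum>t\<in>UNIV. v $ t * ddgN k F (Yc y) (idx t) r a b)) (at y)"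
proof -
  consider (A) "a = 0 \<and> 1 \<le> b \<and> b \<le> k" | (B) "b = 0 \<and> 1 \<le> a \<and> a \<le> k" | (C) "a = b \<and> 1 \<le> a \<and> a \<le> k"
    | (D) "\<not> (a = 0 \<and> 1 \<le> b \<and> b \<le> k)" "\<not> (b = 0 \<and> 1 \<le> a \<and> a \<le> k)" "\<not> (a = b \<and> 1 \<le> a \<and> a \<le> k)"
    by blast
  then show ?thesis
  proof cases
    case A
    then have ab: "1 \<le> b" "b \<le> k" "a = 0" by auto
    consider "r = b" | "r = 2*k+1+b" | "r \<noteq> b" "r \<noteq> 2*k+1+b" by blast
    then show ?thesis
    proof cases
      case 1
      have d: "dgN k F Y r a b = 2 * deriv (F b) (Y b) * Y (2*k+1+b)" for Y using A 1 by (simp add: dgN_def)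
      have dd: "ddgN k F Y t r a b = (if t = b then 2 * deriv (deriv (F b)) (Y b) * Y (2*k+1+b) else if t = 2*k+1+b then 2 * deriv (F b) (Y b) else 0)" for Y t
        using A 1 by (simp add: ddgN_def)
      show ?thesis unfolding d dd by (rule hd_cFY[OF F_d2]) (use ab in auto)
    next
      case 2
      have d: "dgN k F Y r a b = 2 * F b (Y b)" for Y using A 2 by (simp add: dgN_def)
      have dd: "ddgN k F Y t r a b = (if t = b then 2 * deriv (F b) (Y b) else 0)" for Y t
        using A 2 by (simp add: ddgN_def)
      show ?thesis unfolding d dd by (rule hd_cF[OF F_d1]) (use ab in auto)
    next
      case 3
      have d: "dgN k F Y r a b = 0" for Y using A 3 by (simp add: dgN_def)
      have dd: "ddgN k F Y t r a b = 0" for Y t using A 3 by (simp add: ddgN_def)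
      show ?thesis unfolding d dd by simp
    qed
  next
    case B
    then have ab: "1 \<le> a" "a \<le> k" "b = 0" by auto
    consider "r = a" | "r = 2*k+1+a" | "r \<noteq> a" "r \<noteq> 2*k+1+a" by blast
    then show ?thesis
    proof cases
      case 1
      have d: "dgN k F Y r a b = 2 * deriv (F a) (Y a) * Y (2*k+1+a)" for Y using B 1 by (simp add: dgN_def)
      have dd: "ddgN k F Y t r a b = (if t = a then 2 * deriv (deriv (F a)) (Y a) * Y (2*k+1+a) else if t = 2*k+1+a then 2 * deriv (F a) (Y a) else 0)" for Y t
        using B 1 by (simp add: ddgN_def)
      show ?thesis unfolding d dd by (rule hd_cFY[OF F_d2]) (use ab in auto)
    next
      case 2
      have d: "dgN k F Y r a b = 2 * F a (Y a)" for Y using B 2 by (simp add: dgN_def)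
      have dd: "ddgN k F Y t r a b = (if t = a then 2 * deriv (F a) (Y a) else 0)" for Y t
        using B 2 by (simp add: ddgN_def)
      show ?thesis unfolding d dd by (rule hd_cF[OF F_d1]) (use ab in auto)
    next
      case 3
      have d: "dgN k F Y r a b = 0" for Y using B 3 by (simp add: dgN_def)
      have dd: "ddgN k F Y t r a b = 0" for Y t using B 3 by (simp add: ddgN_def)
      show ?thesis unfolding d dd by simp
    qed
  next
    case C
    then have ab: "1 \<le> a" "a \<le> k" "b = a" by auto
    consider "r = 0" | "r = 2*k+1+a" | "r \<noteq> 0" "r \<noteq> 2*k+1+a" by blast
    then show ?thesis
    proof cases
      case 1
      have d: "dgN k F Y r a b = - 2 * Y (2*k+1+a)" for Y using C 1 by (simp add: dgN_def)
      have dd: "ddgN k F Y t r a b = (if t = 2*k+1+a then - 2 else 0)" for Y t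
        using C 1 by (simp add: ddgN_def)
      show ?thesis unfolding d dd by (rule hd_cY) (use ab in auto)
    next
      case 2
      have d: "dgN k F Y r a b = - 2 * Y 0" for Y using C 2 by (simp add: dgN_def)
      have dd: "ddgN k F Y t r a b = (if t = 0 then - 2 else 0)" for Y t
        using C 2 by (simp add: ddgN_def)
      show ?thesis unfolding d dd by (rule hd_cY) (use ab in auto)
    next
      case 3
      have d: "dgN k F Y r a b = 0" for Y using C 3 by (simp add: dgN_def)
      have dd: "ddgN k F Y t r a b = 0" for Y t using C 3 by (simp add: ddgN_def)
      show ?thesis unfolding d dd by simp
    qed
  next
    case D
    have c1: "(a = 0 \<and> 1 \<le> b \<and> b \<le> k) = False" "(b = 0 \<and> 1 \<le> a \<and> a \<le> k) = False"
      "(a = b \<and> 1 \<le> a \<and> a \<le> k) = False" using D by blast+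
    have d: "dgN k F Y r a b = 0" for Y unfolding dgN_def c1 if_False ..
    have dd: "ddgN k F Y t r a b = 0" for Y t unfolding ddgN_def c1 if_False ..
    show ?thesis unfolding d dd by simp
  qed
qed


definition "Gamf y c = (\<chi> p q. GamN k eps F (Yc y) (idx p) (idx c) (idx q))"
definition "DGf y v = (\<chi> p q. \<Sum>r\<in>UNIV. v $ r * dgN k F (Yc y) (idx r) (idx p) (idx q))"

lemma gF_deriv: "(gF k idx eps F has_derivative DGf y) (at y)"
proof (rule has_derivative_vec2)
  fix p q
  show "((\<lambda>y. gF k idx eps F y $ p $ q) has_derivative (\<lambda>h. DGf y h $ p $ q)) (at y)"
    unfolding gF_gN DGf_def by (simp add: gN_deriv)
qed

lemma lower:
  assumes f0: "\<And>m. m \<le> k \<Longrightarrow> f m = 0" and q: "q < 3*k+2"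
  shows "(\<Sum>p\<in>UNIV. f (idx p) * gN k eps F Y (idx p) q)
     = (if q \<le> k then f (k+1+q) else if 2*k+2 \<le> q \<and> q \<le> 3*k+1 then eps (q - (2*k+1)) * f q else 0)"
proof -
  have lt: "idx p < 3*k+2" for p using idx_lt[OF bij] .
  show ?thesis using q
  proof (cases rule: label_cases)
    case U
    have "(\<Sum>p\<in>UNIV. f (idx p) * gN k eps F Y (idx p) q) = f (idx (ixn idx (k+1+q))) * gN k eps F Y (idx (ixn idx (k+1+q))) q"
    proof (rule sum_ixn_delta[OF bij])
      show "k+1+q < 3*k+2" using U by simp
      fix p assume np: "idx p \<noteq> k+1+q"
      show "f (idx p) * gN k eps F Y (idx p) q = 0"
        using lt[of p] by (cases rule: label_cases) (use U np f0 in \<open>auto simp: gN_def\<close>)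
    qed
    also have "\<dots> = f (k+1+q)" using U idx_ixn[OF bij, of "k+1+q"] by (simp add: gN_def)
    finally show ?thesis using U by simp
  next
    case (V c)
    have "(\<Sum>p\<in>UNIV. f (idx p) * gN k eps F Y (idx p) q) = 0"
    proof (rule sum.neutral, rule ballI)
      fix p show "f (idx p) * gN k eps F Y (idx p) q = 0"
        using lt[of p] by (cases rule: label_cases) (use V f0 in \<open>auto simp: gN_def\<close>)
    qed
    then show ?thesis using V by simp
  next
    case (S i)
    have "(\<Sum>p\<in>UNIV. f (idx p) * gN k eps F Y (idx p) q) = f (idx (ixn idx q)) * gN k eps F Y (idx (ixn idx q)) q"
    proof (rule sum_ixn_delta[OF bij q])
      fix p assume np: "idx p \<noteq> q"
      show "f (idx p) * gN k eps F Y (idx p) q = 0"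
        using lt[of p] by (cases rule: label_cases) (use S np f0 in \<open>auto simp: gN_def\<close>)
    qed
    also have "\<dots> = eps (q - (2*k+1)) * f q" using S idx_ixn[OF bij q] by (simp add: gN_def)
    finally show ?thesis using S by simp
  qed
qed


lemma K1:
  assumes epsv: "\<forall>i\<in>{1..k}. eps i = 1 \<or> eps i = -1" and q: "q < 3*k+2"
  shows "(\<Sum>p\<in>UNIV. GamN k eps F Y (idx p) a b * gN k eps F Y (idx p) q) = GL k F Y a b q"
proof -
  have "(\<Sum>p\<in>UNIV. GamN k eps F Y (idx p) a b * gN k eps F Y (idx p) q)
     = (if q \<le> k then GamN k eps F Y (k+1+q) a b else if 2*k+2 \<le> q \<and> q \<le> 3*k+1 then eps (q - (2*k+1)) * GamN k eps F Y q a b else 0)"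
    by (rule lower[OF _ q]) (simp add: GamN_def)
  also have "\<dots> = GL k F Y a b q"
  proof -
    consider "q \<le> k" | "k+1 \<le> q \<and> q \<le> 2*k+1" | "2*k+2 \<le> q \<and> q \<le> 3*k+1" using q by linarith
    then show ?thesis
    proof cases
      case 1 then show ?thesis by (simp add: GamN_def)
    next
      case 2 then show ?thesis using GL_V[of k q] by simp
    next
      case 3
      then have "q - (2*k+1) \<in> {1..k}" by auto
      then have "eps (q - (2*k+1)) = 1 \<or> eps (q - (2*k+1)) = -1" using epsv by blast
      then have "eps (q - (2*k+1)) * eps (q - (2*k+1)) = 1" by auto
      then show ?thesis using 3 by (simp add: GamN_def mult.assoc[symmetric])
    qed
  qed
  finally show ?thesis .
qed

lemma bilin_DGf: "bilin (DGf y v) w z = tri (\<lambda>c b q. dgN k F (Yc y) (idx c) (idx b) (idx q)) v w z"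
proof -
  have "bilin (DGf y v) w z = (\<Sum>p\<in>UNIV. \<Sum>q\<in>UNIV. \<Sum>r\<in>UNIV. v $ r * w $ p * z $ q * dgN k F (Yc y) (idx r) (idx p) (idx q))"
    unfolding bilin_def DGf_def by (simp add: sum_distrib_left sum_distrib_right mult_ac)
  also have "\<dots> = tri (\<lambda>c b q. dgN k F (Yc y) (idx c) (idx b) (idx q)) v w z"
    unfolding tri_def by (rule rot3)
  finally show ?thesis .
qed

lemma tri_swap12: "tri T v w z = tri (\<lambda>b c q. T c b q) w v z"
  unfolding tri_def by (subst sum.swap) (simp add: mult_ac)

lemma tri_rot: "tri T v w z = tri (\<lambda>q c b. T c b q) z v w"
  unfolding tri_def by (subst rot3) (simp add: mult_ac)

lemma bilin_Gv: 
  assumes epsv: "\<forall>i\<in>{1..k}. eps i = 1 \<or> eps i = -1"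
  shows "bilin (gF k idx eps F y) (Gv Gamf y v w) z = tri (\<lambda>c b q. GL k F (Yc y) (idx c) (idx b) (idx q)) v w z"
proof -
  let ?G = "gF k idx eps F y"
  have col: "Gamf y c *v w = (\<Sum>b\<in>UNIV. (w $ b) *\<^sub>R (Gamf y c *v axis b 1))" for c
    by (rule linear_axis_expand) simp
  have colb: "bilin ?G (Gamf y c *v axis b 1) z = (\<Sum>q\<in>UNIV. z $ q * GL k F (Yc y) (idx c) (idx b) (idx q))" for c b
  proof -
    have "bilin ?G (Gamf y c *v axis b 1) z = (\<Sum>p\<in>UNIV. \<Sum>q\<in>UNIV. GamN k eps F (Yc y) (idx p) (idx c) (idx b) * ?G $ p $ q * z $ q)"
      unfolding bilin_def by (simp add: Gamf_def matrix_vector_mult_def axis_comp if_distrib[of "\<lambda>x. _ * x"] cong: if_cong)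
    also have "\<dots> = (\<Sum>q\<in>UNIV. z $ q * (\<Sum>p\<in>UNIV. GamN k eps F (Yc y) (idx p) (idx c) (idx b) * gN k eps F (Yc y) (idx p) (idx q)))"
      by (subst sum.swap) (simp add: sum_distrib_left gF_gN mult_ac)
    also have "\<dots> = (\<Sum>q\<in>UNIV. z $ q * GL k F (Yc y) (idx c) (idx b) (idx q))"
      by (simp add: K1[OF epsv idx_lt[OF bij]])
    finally show ?thesis .
  qed
  have "bilin ?G (Gv Gamf y v w) z = (\<Sum>c\<in>UNIV. v $ c * (\<Sum>b\<in>UNIV. w $ b * bilin ?G (Gamf y c *v axis b 1) z))"
    unfolding Gv_def by (simp add: bilin_sum_left col)
  also have "\<dots> = tri (\<lambda>c b q. GL k F (Yc y) (idx c) (idx b) (idx q)) v w z"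
    unfolding tri_def colb by (simp add: sum_distrib_left mult_ac)
  finally show ?thesis .
qed

lemma kos_gF:
  assumes epsv: "\<forall>i\<in>{1..k}. eps i = 1 \<or> eps i = -1"
  shows "bilin (gF k idx eps F y) (Gv Gamf y v w) z = (bilin (DGf y v) w z + bilin (DGf y w) v z - bilin (DGf y z) v w) / 2"
proof -
  let ?d = "\<lambda>c b q. dgN k F (Yc y) (idx c) (idx b) (idx q)"
  have r2: "bilin (DGf y w) v z = tri (\<lambda>c b q. ?d b c q) v w z"
    unfolding bilin_DGf by (rule tri_swap12)
  have r3: "bilin (DGf y z) v w = tri (\<lambda>c b q. ?d q c b) v w z"
    unfolding bilin_DGf by (rule tri_rot[symmetric])
  show ?thesis
    by (simp only: bilin_Gv[OF epsv] r2 r3 bilin_DGf[of y v w z] tri_comb) (simp add: GL_def)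
qed


lemma hd_div2: "(f has_derivative f') Fl \<Longrightarrow> ((\<lambda>x. f x / 2) has_derivative (\<lambda>h. f' h / (2::real))) Fl"
  using has_derivative_mult_right[of f f' Fl "1/2"] by simp

lemma GL_deriv:
  "((\<lambda>y. GL k F (Yc y) a b c) has_derivative (\<lambda>v. \<Sum>t\<in>UNIV. v $ t * dGL k F (Yc y) (idx t) a b c)) (at y)"
proof (rule has_derivative_eq_rhs)
  show "((\<lambda>y. GL k F (Yc y) a b c) has_derivative (\<lambda>v. ((\<Sum>t\<in>UNIV. v $ t * ddgN k F (Yc y) (idx t) a b c)
      + (\<Sum>t\<in>UNIV. v $ t * ddgN k F (Yc y) (idx t) b a c) - (\<Sum>t\<in>UNIV. v $ t * ddgN k F (Yc y) (idx t) c a b)) / 2)) (at y)"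
    unfolding GL_def by (intro hd_div2 has_derivative_add has_derivative_diff dgN_deriv)
next
  show "(\<lambda>v. ((\<Sum>t\<in>UNIV. v $ t * ddgN k F (Yc y) (idx t) a b c)
      + (\<Sum>t\<in>UNIV. v $ t * ddgN k F (Yc y) (idx t) b a c) - (\<Sum>t\<in>UNIV. v $ t * ddgN k F (Yc y) (idx t) c a b)) / 2)
    = (\<lambda>v. \<Sum>t\<in>UNIV. v $ t * dGL k F (Yc y) (idx t) a b c)"
    by (rule ext) (simp add: dGL_def sum_divide_distrib[symmetric] sum.distrib[symmetric] sum_subtractf[symmetric] algebra_simps)
qed

lemma GamN_deriv:
  "((\<lambda>y. GamN k eps F (Yc y) p a b) has_derivative (\<lambda>v. \<Sum>t\<in>UNIV. v $ t * dGamN k eps F (Yc y) (idx t) p a b)) (at y)"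
proof -
  consider "k+1 \<le> p \<and> p \<le> 2*k+1" | "\<not> (k+1 \<le> p \<and> p \<le> 2*k+1)" "2*k+2 \<le> p \<and> p \<le> 3*k+1"
    | "\<not> (k+1 \<le> p \<and> p \<le> 2*k+1)" "\<not> (2*k+2 \<le> p \<and> p \<le> 3*k+1)" by blast
  then show ?thesis
  proof cases
    case 1 then show ?thesis by (simp add: GamN_def dGamN_def GL_deriv)
  next
    case 2
    have "((\<lambda>y. eps (p - (2*k+1)) * GL k F (Yc y) a b p) has_derivative
         (\<lambda>v. eps (p - (2*k+1)) * (\<Sum>t\<in>UNIV. v $ t * dGL k F (Yc y) (idx t) a b p))) (at y)"
      by (intro has_derivative_mult_right GL_deriv)
    then show ?thesis using 2 by (simp add: GamN_def dGamN_def sum_distrib_left mult_ac)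
  next
    case 3
    have c: "(k+1 \<le> p \<and> p \<le> 2*k+1) = False" "(2*k+2 \<le> p \<and> p \<le> 3*k+1) = False" using 3 by auto
    show ?thesis unfolding GamN_def dGamN_def c if_False by simp
  qed
qed

definition "DGamf y c v = (\<chi> p q. \<Sum>t\<in>UNIV. v $ t * dGamN k eps F (Yc y) (idx t) (idx p) (idx c) (idx q))"

lemma Gamf_deriv: "((\<lambda>y. Gamf y c) has_derivative DGamf y c) (at y)"
proof (rule has_derivative_vec2)
  fix p q
  show "((\<lambda>y. Gamf y c $ p $ q) has_derivative (\<lambda>h. DGamf y c h $ p $ q)) (at y)"
    unfolding Gamf_def DGamf_def by (simp add: GamN_deriv)
qed

end


locale kctx =
  fixes k i :: nat and eps :: "nat \<Rightarrow> real" and F :: "nat \<Rightarrow> real \<Rightarrow> real" and Y :: "nat \<Rightarrow> real"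
  assumes i: "1 \<le> i" "i \<le> k"
begin

definition "KA m r = dGamN k eps F Y 0 m i r - dGamN k eps F Y i m 0 r
   + GamN k eps F Y m 0 (2*k+1+i) * GamN k eps F Y (2*k+1+i) i r - GamN k eps F Y m i (2*k+1+i) * GamN k eps F Y (2*k+1+i) 0 r"

definition "KB m r = dGamN k eps F Y i m (2*k+1+i) r - dGamN k eps F Y (2*k+1+i) m i r
   + GamN k eps F Y m i (2*k+1+i) * GamN k eps F Y (2*k+1+i) (2*k+1+i) r - GamN k eps F Y m (2*k+1+i) (2*k+1+i) * GamN k eps F Y (2*k+1+i) i r"

abbreviation "aa \<equiv> 1 + deriv (F i) (Y i)"
abbreviation "bb \<equiv> eps i * (F i (Y i))^2"

lemmas defs = KA_def KB_def dGamN_def GamN_def dGL_def GL_def ddgN_def dgN_def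

lemma rcases:
  obtains "r = 0" | "r = i" | "r = 2*k+1+i" | "r \<noteq> 0" "r \<noteq> i" "r \<noteq> 2*k+1+i" by blast

lemma KA_V:
  assumes "a \<le> k"
  shows "KA (k+1+a) r = (if a = 0 then bb * (if r = i then 1 else 0)
      else if a = i then - bb * (if r = 0 then 1 else 0) - aa * (if r = 2*k+1+i then 1 else 0) else 0)"
proof -
  consider "a = 0" | "a = i" | "a \<noteq> 0" "a \<noteq> i" by blast
  then show ?thesis
  proof cases
    case 1 then show ?thesis using i by (cases rule: rcases[of r]) (simp_all add: defs power2_eq_square)
  next
    case 2 then show ?thesis using i by (cases rule: rcases[of r]) (simp_all add: defs power2_eq_square algebra_simps)
  next
    case 3 then show ?thesis using i assms by (cases rule: rcases[of r]) (simp_all add: defs)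
  qed
qed

lemma KA_S:
  assumes "1 \<le> j" "j \<le> k"
  shows "KA (2*k+1+j) r = (if j = i then eps i * aa * (if r = i then 1 else 0) else 0)"
proof -
  consider "j = i" | "j \<noteq> i" by blast
  then show ?thesis
  proof cases
    case 1 then show ?thesis using i by (cases rule: rcases[of r]) (simp_all add: defs algebra_simps)
  next
    case 2 then show ?thesis using i assms by (cases rule: rcases[of r]) (simp_all add: defs)
  qed
qed

lemma KB_V:
  assumes "a \<le> k"
  shows "KB (k+1+a) r = (if a = 0 then - aa * (if r = i then 1 else 0)
      else if a = i then aa * (if r = 0 then 1 else 0) else 0)"
proof -
  consider "a = 0" | "a = i" | "a \<noteq> 0" "a \<noteq> i" by blast
  then show ?thesis
  proof cases
    case 1 then show ?thesis using i by (cases rule: rcases[of r]) (simp_all add: defs algebra_simps)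
  next
    case 2 then show ?thesis using i by (cases rule: rcases[of r]) (simp_all add: defs algebra_simps)
  next
    case 3 then show ?thesis using i assms by (cases rule: rcases[of r]) (simp_all add: defs)
  qed
qed

lemma KB_S:
  assumes "1 \<le> j" "j \<le> k"
  shows "KB (2*k+1+j) r = 0"
  using i assms by (cases rule: rcases[of r]) (simp_all add: defs)


lemma KA_U: "m \<le> k \<Longrightarrow> KA m r = 0"
  by (simp add: KA_def dGamN_def GamN_def)

lemma KB_U: "m \<le> k \<Longrightarrow> KB m r = 0"
  by (simp add: KB_def dGamN_def GamN_def)

lemma LK_A:
  assumes epsi: "eps i * eps i = 1" and q: "q < 3*k+2"
  shows "(if q \<le> k then KA (k+1+q) r else if 2*k+2 \<le> q \<and> q \<le> 3*k+1 then eps (q - (2*k+1)) * KA q r else 0)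
    = aa * ((if r = i \<and> q = 2*k+1+i then 1 else 0) - (if r = 2*k+1+i \<and> q = i then 1 else 0))
      + bb * ((if r = i \<and> q = 0 then 1 else 0) - (if r = 0 \<and> q = i then 1 else 0))"
  using q
proof (cases rule: label_cases)
  case U then show ?thesis using i KA_V[of q r] by (auto simp: algebra_simps)
next
  case (V c) then show ?thesis using i by auto
next
  case (S j)
  then have "2*k+1+j - (2*k+1) = j" by simp
  then show ?thesis using S i KA_S[of j r] epsi by (auto simp: algebra_simps)
qed

lemma LK_B:
  assumes q: "q < 3*k+2"
  shows "(if q \<le> k then KB (k+1+q) r else if 2*k+2 \<le> q \<and> q \<le> 3*k+1 then eps (q - (2*k+1)) * KB q r else 0)
    = aa * ((if r = 0 \<and> q = i then 1 else 0) - (if r = i \<and> q = 0 then 1 else 0))"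
  using q
proof (cases rule: label_cases)
  case U then show ?thesis using i KB_V[of q r] by (auto simp: algebra_simps)
next
  case (V c) then show ?thesis using i by auto
next
  case (S j) then show ?thesis using i KB_S[of j r] by auto
qed

lemma GamN_iSj:
  assumes "1 \<le> j" "j \<le> k" "j \<noteq> i"
  shows "GamN k eps F Y P i (2*k+1+j) = 0" "GamN k eps F Y (2*k+1+j) i R = 0"
  using i assms by (auto simp: GamN_def GL_def dgN_def)

end

lemma GamN_midV:
  assumes "k+1 \<le> m" "m \<le> 2*k+1"
  shows "GamN k eps F Y P c m = 0"
  using assms by (simp add: GamN_def GL_def dgN_def)

lemma GamN_SS: "1 \<le> i \<Longrightarrow> i \<le> k \<Longrightarrow> GamN k eps F Y P (2*k+1+i) (2*k+1+j) = 0"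
  by (simp add: GamN_def GL_def dgN_def)


lemma smooth_ext1:
  assumes "smooth_on S f" shows "\<exists>f'. \<forall>x\<in>S. (f has_derivative f' x) (at x)"
proof -
  have "Ck (Suc 0) S f" using assms by (simp add: smooth_on_def)
  then show ?thesis by auto
qed

lemma smooth_ext2:
  assumes "smooth_on S f"
  shows "\<exists>f' f''. (\<forall>x\<in>S. (f has_derivative f' x) (at x)) \<and> (\<forall>v. \<forall>x\<in>S. ((\<lambda>x. f' x v) has_derivative f'' v x) (at x))"
proof -
  have "Ck (Suc (Suc 0)) S f" using assms by (simp add: smooth_on_def)
  then obtain f' where d1: "\<forall>x\<in>S. (f has_derivative f' x) (at x)" and c1: "\<forall>v. Ck (Suc 0) S (\<lambda>x. f' x v)"
    by auto
  have "\<forall>v. \<exists>D. \<forall>x\<in>S. ((\<lambda>x. f' x v) has_derivative D x) (at x)"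
  proof
    fix v
    have "Ck (Suc 0) S (\<lambda>x. f' x v)" using c1 by blast
    then obtain D where "\<forall>x\<in>S. ((\<lambda>x. f' x v) has_derivative D x) (at x)" by auto
    then show "\<exists>D. \<forall>x\<in>S. ((\<lambda>x. f' x v) has_derivative D x) (at x)" by blast
  qed
  then obtain f'' where "\<forall>v. \<forall>x\<in>S. ((\<lambda>x. f' x v) has_derivative f'' v x) (at x)" by metis
  then show ?thesis using d1 by blast
qed

context mctx
begin

abbreviation "ix \<equiv> ixn idx"

definition "Kmat y c d = DGamf y d (axis c 1) - DGamf y c (axis d 1) + Gamf y c ** Gamf y d - Gamf y d ** Gamf y c"

lemma sum_axis_coef: "(\<Sum>t\<in>UNIV. axis c (1::real) $ t * X t) = X c"
proof -
  have "(\<Sum>t\<in>UNIV. axis c (1::real) $ t * X t) = (\<Sum>t\<in>UNIV. if t = c then X t else 0)"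
    by (rule sum.cong) (auto simp: axis_comp)
  then show ?thesis by simp
qed

lemma Kmat_entry: "Kmat y c d $ p $ r =
    dGamN k eps F (Yc y) (idx c) (idx p) (idx d) (idx r) - dGamN k eps F (Yc y) (idx d) (idx p) (idx c) (idx r)
    + (\<Sum>m\<in>UNIV. GamN k eps F (Yc y) (idx p) (idx c) (idx m) * GamN k eps F (Yc y) (idx m) (idx d) (idx r))
    - (\<Sum>m\<in>UNIV. GamN k eps F (Yc y) (idx p) (idx d) (idx m) * GamN k eps F (Yc y) (idx m) (idx c) (idx r))"
  by (simp add: Kmat_def DGamf_def Gamf_def matrix_matrix_mult_def sum_axis_coef)

lemma sum_red:
  assumes i: "1 \<le> i" "i \<le> k"
    and hyp: "\<And>j. 1 \<le> j \<Longrightarrow> j \<le> k \<Longrightarrow> j \<noteq> i \<Longrightarrow> GamN k eps F Y P' c' (2*k+1+j) * GamN k eps F Y (2*k+1+j) d' R = 0"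
  shows "(\<Sum>m\<in>UNIV. GamN k eps F Y P' c' (idx m) * GamN k eps F Y (idx m) d' R)
       = GamN k eps F Y P' c' (2*k+1+i) * GamN k eps F Y (2*k+1+i) d' R"
proof -
  have "(\<Sum>m\<in>UNIV. GamN k eps F Y P' c' (idx m) * GamN k eps F Y (idx m) d' R)
     = GamN k eps F Y P' c' (idx (ix (2*k+1+i))) * GamN k eps F Y (idx (ix (2*k+1+i))) d' R"
  proof (rule sum_ixn_delta[OF bij])
    show "2*k+1+i < 3*k+2" using i by simp
    fix m assume nm: "idx m \<noteq> 2*k+1+i"
    show "GamN k eps F Y P' c' (idx m) * GamN k eps F Y (idx m) d' R = 0"
      using idx_lt[OF bij, of m]
    proof (cases rule: label_cases)
      case U then show ?thesis by (simp add: GamN_def)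
    next
      case (V c) then show ?thesis using GamN_midV[of k "idx m"] by simp
    next
      case (S j) then show ?thesis using hyp[of j] nm by auto
    qed
  qed
  then show ?thesis using idx_ixn[OF bij, of "2*k+1+i"] i by simp
qed

lemma KmatA:
  assumes i: "1 \<le> i" "i \<le> k"
  shows "Kmat y (ix 0) (ix i) $ p $ r = kctx.KA k i eps F (Yc y) (idx p) (idx r)"
proof -
  have l: "idx (ix 0) = 0" "idx (ix i) = i" using idx_ixn[OF bij] i by auto
  have s1: "(\<Sum>m\<in>UNIV. GamN k eps F (Yc y) (idx p) 0 (idx m) * GamN k eps F (Yc y) (idx m) i (idx r))
     = GamN k eps F (Yc y) (idx p) 0 (2*k+1+i) * GamN k eps F (Yc y) (2*k+1+i) i (idx r)"
    by (rule sum_red[OF i]) (use kctx.GamN_iSj[of k i] i in \<open>simp add: kctx_def\<close>)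
  have s2: "(\<Sum>m\<in>UNIV. GamN k eps F (Yc y) (idx p) i (idx m) * GamN k eps F (Yc y) (idx m) 0 (idx r))
     = GamN k eps F (Yc y) (idx p) i (2*k+1+i) * GamN k eps F (Yc y) (2*k+1+i) 0 (idx r)"
    by (rule sum_red[OF i]) (use kctx.GamN_iSj[of k i] i in \<open>simp add: kctx_def\<close>)
  show ?thesis unfolding Kmat_entry l s1 s2 using i by (simp add: kctx.KA_def kctx_def)
qed

lemma KmatB:
  assumes i: "1 \<le> i" "i \<le> k"
  shows "Kmat y (ix i) (ix (2*k+1+i)) $ p $ r = kctx.KB k i eps F (Yc y) (idx p) (idx r)"
proof -
  have l: "idx (ix (2*k+1+i)) = 2*k+1+i" "idx (ix i) = i" using idx_ixn[OF bij] i by auto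
  have s1: "(\<Sum>m\<in>UNIV. GamN k eps F (Yc y) (idx p) i (idx m) * GamN k eps F (Yc y) (idx m) (2*k+1+i) (idx r))
     = GamN k eps F (Yc y) (idx p) i (2*k+1+i) * GamN k eps F (Yc y) (2*k+1+i) (2*k+1+i) (idx r)"
    by (rule sum_red[OF i]) (use kctx.GamN_iSj[of k i] i in \<open>simp add: kctx_def\<close>)
  have s2: "(\<Sum>m\<in>UNIV. GamN k eps F (Yc y) (idx p) (2*k+1+i) (idx m) * GamN k eps F (Yc y) (idx m) i (idx r))
     = GamN k eps F (Yc y) (idx p) (2*k+1+i) (2*k+1+i) * GamN k eps F (Yc y) (2*k+1+i) i (idx r)"
    by (rule sum_red[OF i]) (use kctx.GamN_iSj[of k i] i in \<open>simp add: kctx_def\<close>)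
  show ?thesis unfolding Kmat_entry l s1 s2 using i by (simp add: kctx.KB_def kctx_def)
qed


lemma bilin_Kz: "bilin G (K *v z) w = (\<Sum>r\<in>UNIV. \<Sum>q\<in>UNIV. z $ r * w $ q * (\<Sum>p\<in>UNIV. K $ p $ r * G $ p $ q))"
proof -
  have "bilin G (K *v z) w = (\<Sum>p\<in>UNIV. \<Sum>q\<in>UNIV. \<Sum>r\<in>UNIV. z $ r * w $ q * (K $ p $ r * G $ p $ q))"
    unfolding bilin_def by (simp add: matrix_vector_mult_def sum_distrib_left sum_distrib_right mult_ac)
  also have "\<dots> = (\<Sum>r\<in>UNIV. \<Sum>q\<in>UNIV. \<Sum>p\<in>UNIV. z $ r * w $ q * (K $ p $ r * G $ p $ q))"
    by (subst rot3) (rule swap_in)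
  finally show ?thesis by (simp add: sum_distrib_left)
qed

lemma sum2_lin: "(\<Sum>r\<in>A. \<Sum>q\<in>B. z r * w q * ((a::real) * X r q + b * Yy r q))
   = a * (\<Sum>r\<in>A. \<Sum>q\<in>B. X r q * z r * w q) + b * (\<Sum>r\<in>A. \<Sum>q\<in>B. Yy r q * z r * w q)"
proof -
  have "(\<Sum>r\<in>A. \<Sum>q\<in>B. z r * w q * (a * X r q + b * Yy r q))
     = (\<Sum>r\<in>A. \<Sum>q\<in>B. a * (X r q * z r * w q) + b * (Yy r q * z r * w q))"
    by (intro sum.cong refl) (simp add: algebra_simps)
  then show ?thesis by (simp add: sum.distrib sum_distrib_left)
qed

lemma sum2_lin1: "(\<Sum>r\<in>A. \<Sum>q\<in>B. z r * w q * ((a::real) * X r q))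
   = a * (\<Sum>r\<in>A. \<Sum>q\<in>B. X r q * z r * w q)"
  by (simp add: sum_distrib_left mult_ac)

lemma B_A:
  assumes i: "1 \<le> i" "i \<le> k" and epsi: "eps i * eps i = 1"
  shows "bilin (gF k idx eps F y) (Kmat y (ix 0) (ix i) *v z) w
    = (1 + deriv (F i) (Yc y i)) * (z $ ix i * w $ ix (2*k+1+i) - z $ ix (2*k+1+i) * w $ ix i)
      + (eps i * (F i (Yc y i))^2) * (z $ ix i * w $ ix 0 - z $ ix 0 * w $ ix i)"
proof -
  let ?a = "1 + deriv (F i) (Yc y i)" and ?b = "eps i * (F i (Yc y i))^2"
  have kc: "kctx k i" using i by (simp add: kctx_def)
  have inner: "(\<Sum>p\<in>UNIV. Kmat y (ix 0) (ix i) $ p $ r * gF k idx eps F y $ p $ q)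
     = ?a * ((if idx r = i \<and> idx q = 2*k+1+i then 1 else 0) - (if idx r = 2*k+1+i \<and> idx q = i then 1 else 0))
      + ?b * ((if idx r = i \<and> idx q = 0 then 1 else 0) - (if idx r = 0 \<and> idx q = i then 1 else 0))" for r q
  proof -
    have "(\<Sum>p\<in>UNIV. Kmat y (ix 0) (ix i) $ p $ r * gF k idx eps F y $ p $ q)
        = (\<Sum>p\<in>UNIV. kctx.KA k i eps F (Yc y) (idx p) (idx r) * gN k eps F (Yc y) (idx p) (idx q))"
      by (simp add: KmatA[OF i] gF_gN)
    also have "\<dots> = (if idx q \<le> k then kctx.KA k i eps F (Yc y) (k+1+idx q) (idx r)
        else if 2*k+2 \<le> idx q \<and> idx q \<le> 3*k+1 then eps (idx q - (2*k+1)) * kctx.KA k i eps F (Yc y) (idx q) (idx r) else 0)"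
      by (rule lower) (use kctx.KA_U[OF kc] idx_lt[OF bij] in auto)
    also have "\<dots> = ?a * ((if idx r = i \<and> idx q = 2*k+1+i then 1 else 0) - (if idx r = 2*k+1+i \<and> idx q = i then 1 else 0))
      + ?b * ((if idx r = i \<and> idx q = 0 then 1 else 0) - (if idx r = 0 \<and> idx q = i then 1 else 0))"
      by (rule kctx.LK_A[where k=k and i=i and eps=eps and F=F and Y="Yc y", OF kc epsi idx_lt[OF bij]])
    finally show ?thesis .
  qed
  have l: "i < 3*k+2" "2*k+1+i < 3*k+2" "0 < 3*k+2" using i by auto
  have "bilin (gF k idx eps F y) (Kmat y (ix 0) (ix i) *v z) w
     = ?a * (\<Sum>r\<in>UNIV. \<Sum>q\<in>UNIV. ((if idx r = i \<and> idx q = 2*k+1+i then 1 else 0) - (if idx r = 2*k+1+i \<and> idx q = i then 1 else 0)) * z $ r * w $ q)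
     + ?b * (\<Sum>r\<in>UNIV. \<Sum>q\<in>UNIV. ((if idx r = i \<and> idx q = 0 then 1 else 0) - (if idx r = 0 \<and> idx q = i then 1 else 0)) * z $ r * w $ q)"
    unfolding bilin_Kz inner by (rule sum2_lin)
  also have "\<dots> = ?a * (z $ ix i * w $ ix (2*k+1+i) - z $ ix (2*k+1+i) * w $ ix i)
      + ?b * (z $ ix i * w $ ix 0 - z $ ix 0 * w $ ix i)"
    by (simp only: sum_pair_delta2[OF bij l(1) l(2)] sum_pair_delta2[OF bij l(1) l(3)])
  finally show ?thesis .
qed

lemma B_B:
  assumes i: "1 \<le> i" "i \<le> k"
  shows "bilin (gF k idx eps F y) (Kmat y (ix i) (ix (2*k+1+i)) *v z) w
    = (1 + deriv (F i) (Yc y i)) * (z $ ix 0 * w $ ix i - z $ ix i * w $ ix 0)"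
proof -
  let ?a = "1 + deriv (F i) (Yc y i)"
  have kc: "kctx k i" using i by (simp add: kctx_def)
  have inner: "(\<Sum>p\<in>UNIV. Kmat y (ix i) (ix (2*k+1+i)) $ p $ r * gF k idx eps F y $ p $ q)
     = ?a * ((if idx r = 0 \<and> idx q = i then 1 else 0) - (if idx r = i \<and> idx q = 0 then 1 else 0))" for r q
  proof -
    have "(\<Sum>p\<in>UNIV. Kmat y (ix i) (ix (2*k+1+i)) $ p $ r * gF k idx eps F y $ p $ q)
        = (\<Sum>p\<in>UNIV. kctx.KB k i eps F (Yc y) (idx p) (idx r) * gN k eps F (Yc y) (idx p) (idx q))"
      by (simp only: KmatB[OF i] gF_gN)
    also have "\<dots> = (if idx q \<le> k then kctx.KB k i eps F (Yc y) (k+1+idx q) (idx r)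
        else if 2*k+2 \<le> idx q \<and> idx q \<le> 3*k+1 then eps (idx q - (2*k+1)) * kctx.KB k i eps F (Yc y) (idx q) (idx r) else 0)"
      by (rule lower) (use kctx.KB_U[OF kc] idx_lt[OF bij] in auto)
    also have "\<dots> = ?a * ((if idx r = 0 \<and> idx q = i then 1 else 0) - (if idx r = i \<and> idx q = 0 then 1 else 0))"
      by (rule kctx.LK_B[where k=k and i=i and eps=eps and F=F and Y="Yc y", OF kc idx_lt[OF bij]])
    finally show ?thesis .
  qed
  have l: "i < 3*k+2" "0 < 3*k+2" using i by auto
  have "bilin (gF k idx eps F y) (Kmat y (ix i) (ix (2*k+1+i)) *v z) w
     = ?a * (\<Sum>r\<in>UNIV. \<Sum>q\<in>UNIV. ((if idx r = 0 \<and> idx q = i then 1 else 0) - (if idx r = i \<and> idx q = 0 then 1 else 0)) * z $ r * w $ q)"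
    unfolding bilin_Kz inner by (rule sum2_lin1)
  also have "\<dots> = ?a * (z $ ix 0 * w $ ix i - z $ ix i * w $ ix 0)"
    by (simp only: sum_pair_delta2[OF bij l(2) l(1)])
  finally show ?thesis .
qed


lemma gF_V: assumes "a \<le> k" shows "gF k idx eps F y $ ix (k+1+a) $ q = (if q = ix a then 1 else 0)"
proof -
  have "idx (ix (k+1+a)) = k+1+a" using idx_ixn[OF bij] assms by simp
  moreover have "q = ix a \<longleftrightarrow> idx q = a" using eq_ixn_iff[OF bij, of a q] assms by simp
  ultimately show ?thesis using assms by (auto simp: gF_gN gN_def)
qed

lemma gF_S: assumes "1 \<le> i" "i \<le> k"
  shows "gF k idx eps F y $ ix (2*k+1+i) $ q = (if q = ix (2*k+1+i) then eps i else 0)"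
proof -
  have "idx (ix (2*k+1+i)) = 2*k+1+i" using idx_ixn[OF bij] assms by simp
  moreover have "q = ix (2*k+1+i) \<longleftrightarrow> idx q = 2*k+1+i" using eq_ixn_iff[OF bij, of "2*k+1+i" q] assms by simp
  ultimately show ?thesis using assms by (auto simp: gF_gN gN_def)
qed

lemma gF_sym: "gF k idx eps F y $ p $ q = gF k idx eps F y $ q $ p"
  by (auto simp: gF_gN gN_def)

lemma comm_sa:
  assumes c: "Pm ** K = K ** Pm" and sa: "\<And>u v. bilin G (Pm *v u) v = bilin G u (Pm *v v)"
  shows "bilin G (K *v (Pm *v z)) w = bilin G (K *v z) (Pm *v w)"
proof -
  have "K *v (Pm *v z) = Pm *v (K *v z)" by (simp add: matrix_vector_mul_assoc c)
  then show ?thesis using sa by simp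
qed

lemma part2:
  assumes k1: "k \<ge> 1" and epsv: "\<forall>i\<in>{1..k}. eps i = 1 \<or> eps i = -1"
    and Fd: "\<forall>i\<in>{1..k}. \<forall>u. deriv (F i) u + 1 \<noteq> 0"
  shows "\<not> locally_decomposable_at (gF k idx eps F) P"
proof
  assume "locally_decomposable_at (gF k idx eps F) P"
  then show False
    unfolding locally_decomposable_at_def
  proof (elim exE conjE)
    fix U W A B :: "(real^'n) set" and \<phi> \<psi> :: "real^'n \<Rightarrow> real^'n" and h :: "real^'n \<Rightarrow> real^'n^'n" and I :: "'n set"
    assume oU: "open U" and PU: "P \<in> U" and oW: "open W" and Ine1: "I \<noteq> {}" and Ine2: "I \<noteq> UNIV"
    and Wd: "W = {splice I a b | a b. a \<in> A \<and> b \<in> B}"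
    and hm: "metric_on W h"
    and hblock: "\<forall>x\<in>W. \<forall>i j. i \<in> I \<and> j \<notin> I \<longrightarrow> h x $ i $ j = 0 \<and> h x $ j $ i = 0"
    and hI: "\<forall>x\<in>W. \<forall>y\<in>W. \<forall>i\<in>I. \<forall>j\<in>I. h x $ i $ j = h (splice I x y) $ i $ j"
    and hJ: "\<forall>x\<in>W. \<forall>y\<in>W. \<forall>i\<in>-I. \<forall>j\<in>-I. h x $ i $ j = h (splice I y x) $ i $ j"
    and \<phi>W: "\<phi> ` W = U" and \<psi>U: "\<psi> ` U = W" and \<psi>\<phi>: "\<forall>x\<in>W. \<psi> (\<phi> x) = x" and \<phi>\<psi>: "\<forall>y\<in>U. \<phi> (\<psi> y) = y"
    and s\<phi>: "smooth_on W \<phi>" and s\<psi>: "smooth_on U \<psi>"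
    and hg: "\<forall>x\<in>W. \<forall>i j. h x $ i $ j = bilin (gF k idx eps F (\<phi> x)) (frechet_derivative \<phi> (at x) (axis i 1)) (frechet_derivative \<phi> (at x) (axis j 1))"
    note Ine = Ine1 Ine2
  obtain \<phi>' \<phi>'' where d\<phi>: "\<forall>x\<in>W. (\<phi> has_derivative \<phi>' x) (at x)"
      and dd\<phi>: "\<forall>v. \<forall>x\<in>W. ((\<lambda>x. \<phi>' x v) has_derivative \<phi>'' v x) (at x)"
    using smooth_ext2[OF s\<phi>] by blast
  obtain \<psi>' \<psi>'' where d\<psi>: "\<forall>x\<in>U. (\<psi> has_derivative \<psi>' x) (at x)"
      and dd\<psi>: "\<forall>v. \<forall>x\<in>U. ((\<lambda>x. \<psi>' x v) has_derivative \<psi>'' v x) (at x)"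
    using smooth_ext2[OF s\<psi>] by blast
  have sh: "smooth_on W h" and hdt: "\<forall>x\<in>W. transpose (h x) = h x \<and> det (h x) \<noteq> 0"
    using hm by (auto simp: metric_on_def)
  obtain h' where dh: "\<forall>x\<in>W. (h has_derivative h' x) (at x)" using smooth_ext1[OF sh] by blast
  have fd: "frechet_derivative \<phi> (at x) = \<phi>' x" if "x \<in> W" for x
    using frechet_derivative_at[OF d\<phi>[rule_format, OF that]] by simp
  interpret S: step1 "gF k idx eps F" DGf Gamf U W \<phi> \<psi> h I \<phi>' \<phi>'' \<psi>' \<psi>'' h'
  proof unfold_locales
    show "open U" "open W" "I \<noteq> {}" "I \<noteq> UNIV" by fact+
    show "\<And>x. x \<in> W \<Longrightarrow> transpose (h x) = h x" "\<And>x. x \<in> W \<Longrightarrow> det (h x) \<noteq> 0" using hdt by auto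
    show "\<And>x i j. x \<in> W \<Longrightarrow> i \<in> I \<Longrightarrow> j \<notin> I \<Longrightarrow> h x $ i $ j = 0 \<and> h x $ j $ i = 0" using hblock by blast
    show "\<And>x y i j. x \<in> W \<Longrightarrow> y \<in> W \<Longrightarrow> i \<in> I \<Longrightarrow> j \<in> I \<Longrightarrow> h x $ i $ j = h (splice I x y) $ i $ j" using hI by blast
    show "\<And>x y i j. x \<in> W \<Longrightarrow> y \<in> W \<Longrightarrow> i \<notin> I \<Longrightarrow> j \<notin> I \<Longrightarrow> h x $ i $ j = h (splice I y x) $ i $ j" using hJ unfolding Ball_def Compl_iff by blast
    show "\<And>x. x \<in> W \<Longrightarrow> \<phi> x \<in> U" "\<And>y. y \<in> U \<Longrightarrow> \<psi> y \<in> W" using \<phi>W \<psi>U by auto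
    show "\<And>x. x \<in> W \<Longrightarrow> \<psi> (\<phi> x) = x" "\<And>y. y \<in> U \<Longrightarrow> \<phi> (\<psi> y) = y" using \<psi>\<phi> \<phi>\<psi> by auto
    show "\<And>x. x \<in> W \<Longrightarrow> (\<phi> has_derivative \<phi>' x) (at x)" using d\<phi> by blast
    show "\<And>x v. x \<in> W \<Longrightarrow> ((\<lambda>x. \<phi>' x v) has_derivative \<phi>'' v x) (at x)" using dd\<phi> by blast
    show "\<And>y. y \<in> U \<Longrightarrow> (\<psi> has_derivative \<psi>' y) (at y)" using d\<psi> by blast
    show "\<And>y v. y \<in> U \<Longrightarrow> ((\<lambda>y. \<psi>' y v) has_derivative \<psi>'' v y) (at y)" using dd\<psi> by blast
    show "\<And>x. x \<in> W \<Longrightarrow> (h has_derivative h' x) (at x)" using dh by blast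
    show "\<And>x i j. x \<in> W \<Longrightarrow> h x $ i $ j = bilin (gF k idx eps F (\<phi> x)) (\<phi>' x (axis i 1)) (\<phi>' x (axis j 1))"
      using hg fd by simp
    show "\<And>y. y \<in> U \<Longrightarrow> (gF k idx eps F has_derivative DGf y) (at y)" by (rule gF_deriv)
    show "\<And>y p q. gF k idx eps F y $ p $ q = gF k idx eps F y $ q $ p" by (rule gF_sym)
    show "\<And>y v w z. y \<in> U \<Longrightarrow> bilin (gF k idx eps F y) (Gv Gamf y v w) z
       = (bilin (DGf y v) w z + bilin (DGf y w) v z - bilin (DGf y z) v w) / 2"
      by (rule kos_gF[OF epsv])
  qed
  define Pm where "Pm = S.Pt P"
  define G where "G = gF k idx eps F P"
  have comm: "Pm ** Kmat P c d = Kmat P c d ** Pm" for c d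
    unfolding Pm_def Kmat_def by (rule S.commute_K[OF PU Gamf_deriv])
  have sa: "bilin G (Pm *v u) v = bilin G u (Pm *v v)" for u v
    unfolding Pm_def G_def by (rule S.Pt_sa[OF PU])
  define Pi where "Pi x = Pm *v x" for x
  have Pi_ax: "Pi (axis r 1) $ p = Pm $ p $ r" for r p
    by (simp add: Pi_def matrix_vector_mult_def axis_comp if_distrib[of "\<lambda>x. _ * x"] cong: if_cong)
  define lam where "lam = Pi (axis (ix 0) 1) $ ix 0"
  have d0: "ix 0 \<noteq> ix i" "ix i \<noteq> ix (2*k+1+i)" "ix 0 \<noteq> ix (2*k+1+i)" if "1 \<le> i" "i \<le> k" for i
    using that by (simp_all add: ixn_eq_iff[OF bij])
  have ane: "1 + deriv (F i) (Yc P i) \<noteq> 0" if "1 \<le> i" "i \<le> k" for i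
    using Fd that by (simp add: add.commute)
  have epsi: "eps i * eps i = 1" if "1 \<le> i" "i \<le> k" for i
    using epsv that by force
  have R1: "Pi (axis r 1) $ ix 0 = (if r = ix 0 then lam else 0) \<and> Pi (axis r 1) $ ix i = (if r = ix i then lam else 0)"
    if i: "1 \<le> i" "i \<le> k" for i r
  proof -
    let ?B = "\<lambda>z w. bilin G (Kmat P (ix i) (ix (2*k+1+i)) *v z) w"
    have Bd: "?B z w = (1 + deriv (F i) (Yc P i)) * (z $ ix 0 * w $ ix i - z $ ix i * w $ ix 0)" for z w
      unfolding G_def by (rule B_B[OF i])
    have sB: "?B (Pi z) w = ?B z (Pi w)" for z w
      unfolding Pi_def by (rule comm_sa[OF comm sa])
    show ?thesis using rows1[of ?B, OF Bd ane[OF i] d0(1)[OF i] sB, of r] unfolding lam_def by auto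
  qed
  have R2: "Pi (axis r 1) $ ix (2*k+1+i) = (if r = ix (2*k+1+i) then lam else 0)"
    if i: "1 \<le> i" "i \<le> k" for i r
  proof -
    let ?B = "\<lambda>z w. bilin G (Kmat P (ix 0) (ix i) *v z) w"
    have Bd: "?B z w = (1 + deriv (F i) (Yc P i)) * (z $ ix i * w $ ix (2*k+1+i) - z $ ix (2*k+1+i) * w $ ix i)
      + (eps i * (F i (Yc P i))^2) * (z $ ix i * w $ ix 0 - z $ ix 0 * w $ ix i)" for z w
      unfolding G_def by (rule B_A[OF i epsi[OF i]])
    have sB: "?B (Pi z) w = ?B z (Pi w)" for z w
      unfolding Pi_def by (rule comm_sa[OF comm sa])
    show ?thesis
      by (rule rows2[of ?B, OF Bd ane[OF i] d0[OF i] sB]) (use R1[OF i] in auto)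
  qed
  have RU: "Pi (axis r 1) $ ix a = (if r = ix a then lam else 0)" if "a \<le> k" for a r
  proof (cases "a = 0")
    case True then show ?thesis using R1[of 1 r] k1 by simp
  next
    case False then show ?thesis using R1[of a r] that by simp
  qed
  have lin: "linear Pi" unfolding Pi_def by simp
  have idem: "Pi (Pi x) = Pi x" for x
    unfolding Pi_def Pm_def by (simp add: matrix_vector_mul_assoc S.Pt_idem[OF PU])
  have "Pi = id \<or> Pi = (\<lambda>x. 0)"
    by (rule final_LA[OF bij lin idem, of G eps lam])
       (use gF_V gF_S gF_sym sa RU R2 in \<open>simp_all add: G_def Pi_def\<close>)
  then show False
  proof
    assume "Pi = id"
    then have "Pm = mat 1" by (intro matrix_eq[THEN iffD2]) (simp add: Pi_def fun_eq_iff)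
    then show False using S.Pt_ne1[OF PU] unfolding Pm_def by simp
  next
    assume "Pi = (\<lambda>x. 0)"
    then have "Pm = 0" by (intro matrix_eq[THEN iffD2]) (simp add: Pi_def fun_eq_iff)
    then show False using S.Pt_ne0[OF PU] unfolding Pm_def by simp
  qed
qed
qed

end


theorem theorem1p7:
  fixes k :: nat and idx :: "'n::finite \<Rightarrow> nat" and eps :: "nat \<Rightarrow> real"
    and F :: "nat \<Rightarrow> real \<Rightarrow> real"
  assumes "k \<ge> 1"
    and "bij_betw idx UNIV {..<3*k+2}"
    and "\<forall>i\<in>{1..k}. eps i = 1 \<or> eps i = -1"
    and "\<forall>i\<in>{1..k}. smooth_on UNIV (F i)"
  shows "\<not> decomposable_model (model_ip k idx eps) (model_R k idx)
    \<and> ((\<forall>i\<in>{1..k}. \<forall>u. deriv (F i) u + 1 \<noteq> 0)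
         \<longrightarrow> (\<forall>P. \<not> locally_decomposable_at (gF k idx eps F) P))"
proof -
  interpret M: mctx k idx F eps
    by unfold_locales (use assms in auto)
  have 1: "\<not> decomposable_model (model_ip k idx eps) (model_R k idx)"
    by (rule part1[OF assms(2) assms(1) assms(3)])
  have 2: "(\<forall>i\<in>{1..k}. \<forall>u. deriv (F i) u + 1 \<noteq> 0) \<longrightarrow> (\<forall>P. \<not> locally_decomposable_at (gF k idx eps F) P)"
    using M.part2[OF assms(1) assms(3)] by blast
  show ?thesis using 1 2 by blast
qed

end
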